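(* For every $k\ge1$ there exist polynomials $q_m^{(k)}(n)\in\mathbb Q[n]$, $1\le m\le k$, each of degree exactly $2m$ with positive leading coefficient, such that for all $n\ge3$ \[ \operatorname{rk}H^{2k}(\overline{\mathcal M}_{0,n},\mathbb Q)=\frac{(k+1)^{k-1}}{(k+1)!}(k+1)^n+\sum_{m=1}^k(-1)^m q_m^{(k)}(n)\,(k+1-m)^n. \]
   Context: $\overline{\mathcal M}_{0,n}$ is the moduli space of stable $n$-pointed rational curves over $\mathbb C$. Equivalently, $\operatorname{rk}H^{2k}(\overline{\mathcal M}_{0,n},\mathbb Q)$ is the coefficient of $t^k$ in $P_n(t)$, where $P_3=1$ and $P_n(t)=P_{n-1}(t)(1+t)+t\sum_{i=3}^{n-2}\binom{n-2}{i-1}P_i(t)P_{n+1-i}(t)$ for $n>3$. *)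

theory Defs
  imports "HOL-Computational_Algebra.Polynomial"
begin

text \<open>Poincare polynomial P_n(t) of the moduli space M_{0,n} (bar), via the recursion
  P_3 = 1, P_n = P_{n-1} (1+t) + t * sum_{i=3}^{n-2} binom(n-2, i-1) P_i P_{n+1-i} for n > 3.
  For n < 3 the value is irrelevant (set to 0).\<close>
function poincare_M0 :: "nat \<Rightarrow> nat poly" where
  "poincare_M0 n =
     (if n < 3 then 0
      else if n = 3 then 1
      else poincare_M0 (n - 1) * [:1, 1:]
           + monom 1 1 * (\<Sum>i\<in>{3..n-2}. smult ((n - 2) choose (i - 1))
                 (poincare_M0 i * poincare_M0 (n + 1 - i))))"
  by auto
termination
  by (relation "measure id") auto

text \<open>rank of H^{2k}(M_{0,n} bar, Q) = coefficient of t^k in P_n(t).\<close>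
definition rk_H :: "nat \<Rightarrow> nat \<Rightarrow> nat" where
  "rk_H n k = coeff (poincare_M0 n) k"

end

theory Submission
  imports Defs
begin

fun bp :: "nat \<Rightarrow> rat poly" where
  "bp 0 = 1"
| "bp (Suc d) = smult (1 / of_nat (Suc d)) (bp d * [:- of_nat d, 1:])"

declare bp.simps(2)[simp del]

lemma poly_bp: "poly (bp d) z = z gchoose d"
proof (induction d)
  case 0 then show ?case by simp
next
  case (Suc d)
  have "of_nat (Suc d) * (z gchoose Suc d) = (z - of_nat d) * (z gchoose d)"
    using gbinomial_mult_1[of z d] by (simp add: algebra_simps)
  then have "z gchoose Suc d = (z - of_nat d) * (z gchoose d) / of_nat (Suc d)"
    by (metis nonzero_mult_div_cancel_left of_nat_eq_0_iff nat.distinct(1))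
  then show ?case using Suc by (simp add: field_simps bp.simps)
qed

lemma degree_bp: "degree (bp d) = d \<and> coeff (bp d) d = 1 / fact d"
proof (induction d)
  case 0 then show ?case by simp
next
  case (Suc d)
  have nz: "bp d \<noteq> 0" using Suc by (auto simp: )
  have "degree (bp d * [:- of_nat d, 1:]) = Suc d"
    using Suc nz by (simp add: degree_mult_eq del: mult_pCons_right)
  moreover have "coeff (bp d * [:- of_nat d, 1:]) (Suc d) = 1 / fact d"
    using Suc lead_coeff_mult[of "bp d" "[:- of_nat d, 1:]"] \<open>degree (bp d * [:- of_nat d, 1:]) = Suc d\<close>
    by (simp del: mult_pCons_right)
  moreover have "(1::rat) / of_nat (Suc d) * (1 / fact d) = 1 / fact (Suc d)"
    by (simp add: fact_Suc)
  ultimately show ?case by (simp add: bp.simps del: mult_pCons_right)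
qed

lemma poly_eqI_rat: "(\<And>z. poly p z = poly q z) \<Longrightarrow> (p::rat poly) = q"
  by (metis poly_eq_poly_eq_iff ext)

lemma bp_pascal: "pcompose (bp (Suc d)) [:1,1:] = bp (Suc d) + bp d"
  by (rule poly_eqI_rat) (simp only: poly_pcompose poly_add poly_bp, simp add: gbinomial_Suc_Suc add.commute)

lemma shift_deg: "degree (pcompose p [:c,1:]) = degree (p::rat poly)"
  by (simp add: degree_pcompose)

lemma shift_coeff:
  assumes "degree (p::rat poly) \<le> d"
  shows "coeff (pcompose p [:c,1:]) d = coeff p d"
proof (cases "degree p = d")
  case True
  then show ?thesis using lead_coeff_comp[of "[:c,1:]" p] shift_deg[of p c] by simp
next
  case False
  then have "degree p < d" using assms by simp
  then show ?thesis using shift_deg[of p c] by (simp add: coeff_eq_0)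
qed

lemma top_zero_deg:
  assumes "degree (p::rat poly) \<le> d" "coeff p d = 0"
  shows "(d = 0 \<longrightarrow> p = 0) \<and> degree p \<le> d - 1"
proof (cases "degree p = d")
  case True
  then have "p = 0" using assms(2) by (metis leading_coeff_0_iff)
  then show ?thesis by simp
next
  case False
  then show ?thesis using assms by auto
qed

lemma decomp_bp:
  assumes "degree (p::rat poly) \<le> d"
  defines "p1 \<equiv> p - smult (coeff p d * fact d) (bp d)"
  shows "p = smult (coeff p d * fact d) (bp d) + p1 \<and> (d = 0 \<longrightarrow> p1 = 0) \<and> degree p1 \<le> d - 1"
proof -
  have "degree p1 \<le> d" unfolding p1_def using assms degree_bp[of d]
    by (metis degree_diff_le degree_smult_le order.trans)
  moreover have "coeff p1 d = 0" unfolding p1_def using degree_bp[of d] by simp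
  ultimately show ?thesis using top_zero_deg[of p1 d] unfolding p1_def by simp
qed

lemma mulx_coeff:
  assumes "degree (p::rat poly) \<le> d"
  shows "degree (p * [:c,1:]) \<le> d + 1 \<and> coeff (p * [:c,1:]) (d+1) = coeff p d"
proof -
  have "degree (p * [:c,1:]) \<le> d + 1" using degree_mult_le[of p "[:c,1:]"] assms by simp
  moreover have "coeff (p * [:c,1:]) (d+1) = coeff p d"
    using assms by (simp add: coeff_eq_0)
  ultimately show ?thesis by simp
qed


definition cs :: "rat \<Rightarrow> rat \<Rightarrow> rat poly \<Rightarrow> rat poly \<Rightarrow> nat \<Rightarrow> rat" where
  "cs x y p q N = (\<Sum>s\<le>N. of_nat (N choose s) * (poly p (of_nat s) * x^s) * (poly q (of_nat (N-s)) * y^(N-s)))"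

lemma trin:
  fixes a b t u :: nat
  shows "((a+b+t+u) choose (a+t)) * ((a+t) choose a) * ((b+u) choose b)
       = ((a+b+t+u) choose (a+b)) * ((a+b) choose a) * ((t+u) choose t)"
proof -
  let ?N = "a+b+t+u"
  have e1: "(of_nat (?N choose (a+t)) :: rat) = fact ?N / (fact (a+t) * fact (b+u))"
    using binomial_fact[of "a+t" ?N] by (simp add: add.commute add.left_commute)
  have e2: "(of_nat ((a+t) choose a) :: rat) = fact (a+t) / (fact a * fact t)"
    using binomial_fact[of a "a+t"] by simp
  have e3: "(of_nat ((b+u) choose b) :: rat) = fact (b+u) / (fact b * fact u)"
    using binomial_fact[of b "b+u"] by simp
  have f1: "(of_nat (?N choose (a+b)) :: rat) = fact ?N / (fact (a+b) * fact (t+u))"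
    using binomial_fact[of "a+b" ?N] by (simp add: add.assoc)
  have f2: "(of_nat ((a+b) choose a) :: rat) = fact (a+b) / (fact a * fact b)"
    using binomial_fact[of a "a+b"] by simp
  have f3: "(of_nat ((t+u) choose t) :: rat) = fact (t+u) / (fact t * fact u)"
    using binomial_fact[of t "t+u"] by simp
  have "(of_nat ((?N choose (a+t)) * ((a+t) choose a) * ((b+u) choose b)) :: rat)
     = of_nat ((?N choose (a+b)) * ((a+b) choose a) * ((t+u) choose t))"
    unfolding of_nat_mult e1 e2 e3 f1 f2 f3 by (simp add: field_simps)
  then show ?thesis using of_nat_eq_iff by blast
qed

lemma poly_bp_nat: "poly (bp d) (of_nat n) = of_nat (n choose d)"
  by (simp only: poly_bp binomial_gbinomial)

lemma cs_bp:
  assumes xy: "x + y \<noteq> 0"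
  shows "cs x y (bp a) (bp b) N = of_nat ((a+b) choose a) * x^a * y^b / (x+y)^(a+b)
           * of_nat (N choose (a+b)) * (x+y)^N"
proof -
  define f where "f s = (of_nat ((N choose s) * (s choose a) * ((N-s) choose b)) :: rat) * x^s * y^(N-s)" for s
  have cs_eq: "cs x y (bp a) (bp b) N = (\<Sum>s\<le>N. f s)"
    unfolding cs_def f_def by (intro sum.cong refl) (simp only: poly_bp_nat, simp add: algebra_simps)
  show ?thesis
  proof (cases "N < a + b")
    case True
    have "f s = 0" if "s \<le> N" for s
    proof -
      have "(s choose a) = 0 \<or> ((N-s) choose b) = 0"
        using True that by (cases "s < a") auto
      then show ?thesis unfolding f_def by auto
    qed
    then have "cs x y (bp a) (bp b) N = 0" using cs_eq by simp
    then show ?thesis using True by simp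
  next
    case False
    then obtain M where N: "N = a + b + M" by (metis add.commute le_iff_add not_less)
    have z: "f s = 0" if "s \<in> {..N} - {a..a+M}" for s
    proof -
      have "(s choose a) = 0 \<or> ((N-s) choose b) = 0"
        using that N by (cases "s < a") auto
      then show ?thesis unfolding f_def by auto
    qed
    have "(\<Sum>s\<le>N. f s) = (\<Sum>s\<in>{a..a+M}. f s)"
      by (rule sum.mono_neutral_right) (use N z in auto)
    also have "\<dots> = (\<Sum>t\<in>{0..M}. f (t + a))"
      using sum.shift_bounds_cl_nat_ivl[of f 0 a M] by (simp add: add.commute)
    also have "\<dots> = (\<Sum>t\<le>M. of_nat ((N choose (a+b)) * ((a+b) choose a)) * x^a * y^b
                        * (of_nat (M choose t) * x^t * y^(M-t)))"
    proof (intro sum.cong)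
      fix t assume "t \<in> {..M}"
      then have tM: "t \<le> M" by simp
      then obtain u where u: "M = t + u" by (metis le_iff_add)
      have "(N choose (t+a)) * ((t+a) choose a) * ((N-(t+a)) choose b)
            = (N choose (a+b)) * ((a+b) choose a) * (M choose t)"
        using trin[of a b t u] N u by (simp add: add.commute add.left_commute)
      moreover have "N - (t + a) = b + (M - t)" using N tM by simp
      ultimately show "f (t + a) = of_nat ((N choose (a+b)) * ((a+b) choose a)) * x^a * y^b
                        * (of_nat (M choose t) * x^t * y^(M-t))"
        unfolding f_def by (simp add: power_add algebra_simps)
    qed (auto simp: atLeast0AtMost)
    also have "\<dots> = of_nat ((N choose (a+b)) * ((a+b) choose a)) * x^a * y^b * (x+y)^M"
      by (simp add: sum_distrib_left binomial_ring)
    also have "(x+y)^M = (x+y)^N / (x+y)^(a+b)"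
      using xy N by (simp add: power_add)
    finally show ?thesis using cs_eq by (simp add: field_simps)
  qed
qed


definition CG :: "rat \<Rightarrow> rat \<Rightarrow> rat poly \<Rightarrow> rat poly \<Rightarrow> nat \<Rightarrow> nat \<Rightarrow> bool" where
  "CG x y p q a b \<longleftrightarrow> (\<exists>R. degree R \<le> a+b \<and>
      coeff R (a+b) = coeff p a * coeff q b * x^a * y^b / (x+y)^(a+b) \<and>
      (\<forall>N. cs x y p q N = poly R (of_nat N) * (x+y)^N))"

lemma cs_add1: "cs x y (p1 + p2) q N = cs x y p1 q N + cs x y p2 q N"
  unfolding cs_def by (simp add: sum.distrib[symmetric] algebra_simps)
lemma cs_add2: "cs x y p (q1 + q2) N = cs x y p q1 N + cs x y p q2 N"
  unfolding cs_def by (simp add: sum.distrib[symmetric] algebra_simps)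
lemma cs_smult1: "cs x y (smult c p) q N = c * cs x y p q N"
  unfolding cs_def by (simp add: sum_distrib_left algebra_simps)
lemma cs_smult2: "cs x y p (smult c q) N = c * cs x y p q N"
  unfolding cs_def by (simp add: sum_distrib_left algebra_simps)
lemma cs_zero1: "cs x y 0 q N = 0" unfolding cs_def by simp
lemma cs_zero2: "cs x y p 0 N = 0" unfolding cs_def by simp

lemma CG_add1: "CG x y p1 q a b \<Longrightarrow> CG x y p2 q a b \<Longrightarrow> CG x y (p1 + p2) q a b"
  unfolding CG_def
proof (elim exE conjE)
  fix R1 R2 assume h: "degree R1 \<le> a+b" "coeff R1 (a+b) = coeff p1 a * coeff q b * x^a * y^b / (x+y)^(a+b)"
    "\<forall>N. cs x y p1 q N = poly R1 (of_nat N) * (x+y)^N"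
    "degree R2 \<le> a+b" "coeff R2 (a+b) = coeff p2 a * coeff q b * x^a * y^b / (x+y)^(a+b)"
    "\<forall>N. cs x y p2 q N = poly R2 (of_nat N) * (x+y)^N"
  show "\<exists>R. degree R \<le> a+b \<and> coeff R (a+b) = coeff (p1+p2) a * coeff q b * x^a * y^b / (x+y)^(a+b) \<and>
      (\<forall>N. cs x y (p1+p2) q N = poly R (of_nat N) * (x+y)^N)"
    by (rule exI[of _ "R1 + R2"]) (use h in \<open>auto simp: cs_add1 degree_add_le algebra_simps add_divide_distrib\<close>)
qed

lemma CG_add2: "CG x y p q1 a b \<Longrightarrow> CG x y p q2 a b \<Longrightarrow> CG x y p (q1 + q2) a b"
  unfolding CG_def
proof (elim exE conjE)
  fix R1 R2 assume h: "degree R1 \<le> a+b" "coeff R1 (a+b) = coeff p a * coeff q1 b * x^a * y^b / (x+y)^(a+b)"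
    "\<forall>N. cs x y p q1 N = poly R1 (of_nat N) * (x+y)^N"
    "degree R2 \<le> a+b" "coeff R2 (a+b) = coeff p a * coeff q2 b * x^a * y^b / (x+y)^(a+b)"
    "\<forall>N. cs x y p q2 N = poly R2 (of_nat N) * (x+y)^N"
  show "\<exists>R. degree R \<le> a+b \<and> coeff R (a+b) = coeff p a * coeff (q1+q2) b * x^a * y^b / (x+y)^(a+b) \<and>
      (\<forall>N. cs x y p (q1+q2) N = poly R (of_nat N) * (x+y)^N)"
    by (rule exI[of _ "R1 + R2"]) (use h in \<open>auto simp: cs_add2 degree_add_le algebra_simps add_divide_distrib\<close>)
qed

lemma CG_smult1: "CG x y p q a b \<Longrightarrow> CG x y (smult c p) q a b"
  unfolding CG_def
proof (elim exE conjE)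
  fix R assume h: "degree R \<le> a+b" "coeff R (a+b) = coeff p a * coeff q b * x^a * y^b / (x+y)^(a+b)"
    "\<forall>N. cs x y p q N = poly R (of_nat N) * (x+y)^N"
  show "\<exists>R. degree R \<le> a+b \<and> coeff R (a+b) = coeff (smult c p) a * coeff q b * x^a * y^b / (x+y)^(a+b) \<and>
      (\<forall>N. cs x y (smult c p) q N = poly R (of_nat N) * (x+y)^N)"
    by (rule exI[of _ "smult c R"]) (use h in \<open>auto simp: cs_smult1 degree_add_le algebra_simps\<close>)
qed

lemma CG_smult2: "CG x y p q a b \<Longrightarrow> CG x y p (smult c q) a b"
  unfolding CG_def
proof (elim exE conjE)
  fix R assume h: "degree R \<le> a+b" "coeff R (a+b) = coeff p a * coeff q b * x^a * y^b / (x+y)^(a+b)"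
    "\<forall>N. cs x y p q N = poly R (of_nat N) * (x+y)^N"
  show "\<exists>R. degree R \<le> a+b \<and> coeff R (a+b) = coeff p a * coeff (smult c q) b * x^a * y^b / (x+y)^(a+b) \<and>
      (\<forall>N. cs x y p (smult c q) N = poly R (of_nat N) * (x+y)^N)"
    by (rule exI[of _ "smult c R"]) (use h in \<open>auto simp: cs_smult2 degree_add_le algebra_simps\<close>)
qed

lemma CG_zero1: "CG x y 0 q a b"
  unfolding CG_def by (rule exI[of _ 0]) (simp add: cs_zero1)
lemma CG_zero2: "CG x y p 0 a b"
  unfolding CG_def by (rule exI[of _ 0]) (simp add: cs_zero2)

lemma CG_lower1: "CG x y p q a' b \<Longrightarrow> a' < a \<Longrightarrow> coeff p a = 0 \<Longrightarrow> CG x y p q a b"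
  unfolding CG_def
proof (elim exE conjE)
  fix R assume h: "degree R \<le> a'+b" "\<forall>N. cs x y p q N = poly R (of_nat N) * (x+y)^N"
    and a: "a' < a" "coeff p a = 0"
  show "\<exists>R. degree R \<le> a+b \<and> coeff R (a+b) = coeff p a * coeff q b * x^a * y^b / (x+y)^(a+b) \<and>
      (\<forall>N. cs x y p q N = poly R (of_nat N) * (x+y)^N)"
    by (rule exI[of _ R]) (use h a in \<open>auto simp: coeff_eq_0\<close>)
qed

lemma CG_lower2: "CG x y p q a b' \<Longrightarrow> b' < b \<Longrightarrow> coeff q b = 0 \<Longrightarrow> CG x y p q a b"
  unfolding CG_def
proof (elim exE conjE)
  fix R assume h: "degree R \<le> a+b'" "\<forall>N. cs x y p q N = poly R (of_nat N) * (x+y)^N"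
    and a: "b' < b" "coeff q b = 0"
  show "\<exists>R. degree R \<le> a+b \<and> coeff R (a+b) = coeff p a * coeff q b * x^a * y^b / (x+y)^(a+b) \<and>
      (\<forall>N. cs x y p q N = poly R (of_nat N) * (x+y)^N)"
    by (rule exI[of _ R]) (use h a in \<open>auto simp: coeff_eq_0\<close>)
qed

lemma CG_bp:
  assumes xy: "x + y \<noteq> 0"
  shows "CG x y (bp a) (bp b) a b"
  unfolding CG_def
proof (rule exI[of _ "smult (of_nat ((a+b) choose a) * x^a * y^b / (x+y)^(a+b)) (bp (a+b))"], intro conjI allI)
  show "degree (smult (of_nat ((a+b) choose a) * x^a * y^b / (x+y)^(a+b)) (bp (a+b))) \<le> a+b"
    using degree_bp[of "a+b"] by (simp add: degree_smult_le)
  have "(of_nat ((a+b) choose a) :: rat) * (1 / fact (a+b)) = 1 / fact a * (1 / fact b)"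
    using binomial_fact[of a "a+b", where 'a=rat] by (simp add: field_simps)
  then have e: "(of_nat ((a+b) choose a) :: rat) * coeff (bp (a+b)) (a+b) = coeff (bp a) a * coeff (bp b) b"
    using degree_bp[of a] degree_bp[of b] degree_bp[of "a+b"] by simp
  show "coeff (smult (of_nat ((a+b) choose a) * x^a * y^b / (x+y)^(a+b)) (bp (a+b))) (a+b)
     = coeff (bp a) a * coeff (bp b) b * x^a * y^b / (x+y)^(a+b)"
    using e by (simp add: field_simps)
  fix N
  show "cs x y (bp a) (bp b) N = poly (smult (of_nat ((a+b) choose a) * x^a * y^b / (x+y)^(a+b)) (bp (a+b))) (of_nat N) * (x+y)^N"
    using cs_bp[OF xy, of a b N] by (simp add: poly_bp_nat)
qed

lemma CG_q:
  assumes xy: "x + y \<noteq> 0"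
  shows "degree q \<le> b \<Longrightarrow> CG x y (bp a) q a b"
proof (induction b arbitrary: q)
  case 0
  obtain q1 where d: "q = smult (coeff q 0 * fact 0) (bp 0) + q1" "q1 = 0"
    using decomp_bp[OF 0] by auto
  show ?case
    by (subst d(1)) (rule CG_add2, rule CG_smult2, rule CG_bp[OF xy], simp add: d(2) CG_zero2)
next
  case (Suc b)
  obtain q1 where d: "q = smult (coeff q (Suc b) * fact (Suc b)) (bp (Suc b)) + q1" "degree q1 \<le> b"
    using decomp_bp[OF Suc.prems, unfolded diff_Suc_1] by blast
  have c: "coeff q1 (Suc b) = 0" using d(2) by (simp add: coeff_eq_0)
  show ?case
    by (subst d(1)) (rule CG_add2, rule CG_smult2, rule CG_bp[OF xy],
        rule CG_lower2[OF Suc.IH[OF d(2)] _ c], simp)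
qed

lemma CG_all:
  assumes xy: "x + y \<noteq> 0" and q: "degree q \<le> b"
  shows "degree p \<le> a \<Longrightarrow> CG x y p q a b"
proof (induction a arbitrary: p)
  case 0
  obtain p1 where d: "p = smult (coeff p 0 * fact 0) (bp 0) + p1" "p1 = 0"
    using decomp_bp[OF 0] by auto
  show ?case
    by (subst d(1)) (rule CG_add1, rule CG_smult1, rule CG_q[OF xy q], simp add: d(2) CG_zero1)
next
  case (Suc a)
  obtain p1 where d: "p = smult (coeff p (Suc a) * fact (Suc a)) (bp (Suc a)) + p1" "degree p1 \<le> a"
    using decomp_bp[OF Suc.prems, unfolded diff_Suc_1] by blast
  have c: "coeff p1 (Suc a) = 0" using d(2) by (simp add: coeff_eq_0)
  show ?case
    by (subst d(1)) (rule CG_add1, rule CG_smult1, rule CG_q[OF xy q],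
        rule CG_lower1[OF Suc.IH[OF d(2)] _ c], simp)
qed


definition AD1P :: "rat poly \<Rightarrow> nat \<Rightarrow> bool" where
  "AD1P p d \<longleftrightarrow> (\<exists>Q. degree Q \<le> d+1 \<and> coeff Q (d+1) = coeff p d / of_nat (d+1) \<and>
                     Q - pcompose Q [:-1,1:] = p)"

lemma AD1P_add: "AD1P p1 d \<Longrightarrow> AD1P p2 d \<Longrightarrow> AD1P (p1+p2) d"
  unfolding AD1P_def
proof (elim exE conjE)
  fix Q1 Q2 assume h: "degree Q1 \<le> d+1" "coeff Q1 (d+1) = coeff p1 d / of_nat (d+1)" "Q1 - pcompose Q1 [:-1,1:] = p1"
    "degree Q2 \<le> d+1" "coeff Q2 (d+1) = coeff p2 d / of_nat (d+1)" "Q2 - pcompose Q2 [:-1,1:] = p2"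
  show "\<exists>Q. degree Q \<le> d+1 \<and> coeff Q (d+1) = coeff (p1+p2) d / of_nat (d+1) \<and> Q - pcompose Q [:-1,1:] = p1+p2"
    by (rule exI[of _ "Q1+Q2"]) (use h in \<open>auto simp: degree_add_le pcompose_add add_divide_distrib\<close>)
qed

lemma AD1P_smult: "AD1P p d \<Longrightarrow> AD1P (smult c p) d"
  unfolding AD1P_def
proof (elim exE conjE)
  fix Q assume h: "degree Q \<le> d+1" "coeff Q (d+1) = coeff p d / of_nat (d+1)" "Q - pcompose Q [:-1,1:] = p"
  show "\<exists>Q. degree Q \<le> d+1 \<and> coeff Q (d+1) = coeff (smult c p) d / of_nat (d+1) \<and> Q - pcompose Q [:-1,1:] = smult c p"
    by (rule exI[of _ "smult c Q"]) (use h in \<open>auto simp: pcompose_smult smult_diff_right[symmetric]\<close>)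
qed

lemma AD1P_zero: "AD1P 0 d"
  unfolding AD1P_def by (rule exI[of _ 0]) simp

lemma AD1P_lower: "AD1P p d' \<Longrightarrow> d' < d \<Longrightarrow> coeff p d = 0 \<Longrightarrow> AD1P p d"
  unfolding AD1P_def
proof (elim exE conjE)
  fix Q assume h: "degree Q \<le> d'+1" "Q - pcompose Q [:-1,1:] = p" and a: "d' < d" "coeff p d = 0"
  show "\<exists>Q. degree Q \<le> d+1 \<and> coeff Q (d+1) = coeff p d / of_nat (d+1) \<and> Q - pcompose Q [:-1,1:] = p"
    by (rule exI[of _ Q]) (use h a in \<open>auto simp: coeff_eq_0\<close>)
qed

lemma AD1P_bp: "AD1P (bp d) d"
  unfolding AD1P_def
proof (rule exI[of _ "pcompose (bp (Suc d)) [:1,1:]"], intro conjI)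
  show "degree (pcompose (bp (Suc d)) [:1,1:]) \<le> d+1"
    using degree_bp[of "Suc d"] shift_deg[of "bp (Suc d)" 1] by simp
  have "coeff (pcompose (bp (Suc d)) [:1,1:]) (d+1) = 1 / fact (Suc d)"
    using degree_bp[of "Suc d"] shift_coeff[of "bp (Suc d)" "d+1" 1] by simp
  also have "\<dots> = coeff (bp d) d / of_nat (d+1)"
    by (subst conjunct2[OF degree_bp[of d]]) (simp add: fact_Suc)
  finally show "coeff (pcompose (bp (Suc d)) [:1,1:]) (d+1) = coeff (bp d) d / of_nat (d+1)" .
  show "pcompose (bp (Suc d)) [:1,1:] - pcompose (pcompose (bp (Suc d)) [:1,1:]) [:-1,1:] = bp d"
    by (rule poly_eqI_rat) (simp only: poly_pcompose poly_diff poly_bp, simp add: gbinomial_Suc_Suc[of _ d, unfolded add.commute[of _ 1]])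
qed

lemma AD1_ex: "degree p \<le> d \<Longrightarrow> AD1P p d"
proof (induction d arbitrary: p)
  case 0
  obtain p1 where d: "p = smult (coeff p 0 * fact 0) (bp 0) + p1" "p1 = 0"
    using decomp_bp[OF 0] by auto
  show ?case by (subst d(1)) (rule AD1P_add, rule AD1P_smult, rule AD1P_bp, simp add: d(2) AD1P_zero)
next
  case (Suc d)
  obtain p1 where d: "p = smult (coeff p (Suc d) * fact (Suc d)) (bp (Suc d)) + p1" "degree p1 \<le> d"
    using decomp_bp[OF Suc.prems, unfolded diff_Suc_1] by blast
  have c: "coeff p1 (Suc d) = 0" using d(2) by (simp add: coeff_eq_0)
  show ?case
    by (subst d(1)) (rule AD1P_add, rule AD1P_smult, rule AD1P_bp, rule AD1P_lower[OF Suc.IH[OF d(2)] _ c], simp)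
qed

lemma aux_rho: "(r::rat) \<noteq> 0 \<Longrightarrow> r - 1 \<noteq> 0 \<Longrightarrow> c*r/(r-1) - (1/r)*(c*r/(r-1)) = c"
proof -
  assume a: "(r::rat) \<noteq> 0" "r - 1 \<noteq> 0"
  have "(1/r)*(c*r/(r-1)) = c/(r-1)" using a by simp
  moreover have "c*r/(r-1) - c/(r-1) = c*(r-1)/(r-1)" by (simp add: diff_divide_distrib algebra_simps)
  ultimately show ?thesis using a by simp
qed

lemma AD2_ex:
  fixes \<rho> :: rat
  assumes r1: "\<rho> \<noteq> 1" and r0: "\<rho> \<noteq> 0"
  shows "degree p \<le> d \<Longrightarrow> \<exists>Q. degree Q \<le> d \<and> coeff Q d = coeff p d * \<rho> / (\<rho> - 1) \<and>
            Q - smult (1/\<rho>) (pcompose Q [:-1,1:]) = p"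
proof (induction d arbitrary: p)
  case (0 p)
  define Q0 where "Q0 = smult (coeff p 0 * \<rho> / (\<rho> - 1)) (1::rat poly)"
  have dp: "degree p = 0" using 0 by simp
  have pe: "p = [:coeff p 0:]" using dp by (metis degree_0_id)
  have qid: "Q0 - smult (1/\<rho>) (pcompose Q0 [:-1,1:]) = [:coeff p 0:]"
  proof -
    have "\<rho> - 1 \<noteq> 0" using r1 by simp
    then have e: "coeff p 0 * \<rho> / (\<rho> - 1) - (1/\<rho>) * (coeff p 0 * \<rho> / (\<rho> - 1)) = coeff p 0"
      using r0 aux_rho by blast
    have "Q0 = [:coeff p 0 * \<rho> / (\<rho> - 1):]" unfolding Q0_def by (simp add: one_pCons)
    then show ?thesis using e by simp
  qed
  show ?case
  proof (rule exI[of _ Q0], intro conjI)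
    show "Q0 - smult (1/\<rho>) (pcompose Q0 [:-1,1:]) = p" using qid pe by simp
  qed (simp_all add: Q0_def)
next
  case (Suc d p)
  define c where "c = coeff p (Suc d) * \<rho> / (\<rho> - 1)"
  define Q0 where "Q0 = smult c (monom 1 (Suc d) :: rat poly)"
  define T where "T Q = Q - smult (1/\<rho>) (pcompose Q [:-1,1:])" for Q :: "rat poly"
  have dQ0: "degree Q0 \<le> Suc d" unfolding Q0_def by (simp add: degree_monom_le degree_smult_le order_trans[OF degree_smult_le])
  have "degree (T Q0) \<le> Suc d" unfolding T_def using dQ0 shift_deg[of Q0 "-1"]
    by (metis degree_diff_le degree_smult_le order.trans)
  have cT: "coeff (T Q0) (Suc d) = coeff p (Suc d)"
  proof -
    have "\<rho> - 1 \<noteq> 0" using r1 by simp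
    then show ?thesis unfolding T_def using shift_coeff[OF dQ0, of "-1"] r0
      by (simp add: Q0_def c_def field_simps)
  qed
  define p1 where "p1 = p - T Q0"
  have dp1: "degree p1 \<le> Suc d" unfolding p1_def
    using Suc.prems \<open>degree (T Q0) \<le> Suc d\<close> by (simp add: degree_diff_le)
  have "coeff p1 (Suc d) = 0" unfolding p1_def using cT by simp
  then have dp1': "degree p1 \<le> d" using top_zero_deg[OF dp1] by simp
  obtain Q1 where Q1: "degree Q1 \<le> d" "T Q1 = p1" using Suc.IH[OF dp1'] unfolding T_def by blast
  have "T (Q0 + Q1) = T Q0 + T Q1" unfolding T_def by (simp add: pcompose_add smult_add_right)
  then have "T (Q0 + Q1) = p" using Q1 by (simp add: p1_def)
  moreover have "degree (Q0 + Q1) \<le> Suc d" using dQ0 Q1 by (simp add: degree_add_le)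
  moreover have "coeff (Q0 + Q1) (Suc d) = coeff p (Suc d) * \<rho> / (\<rho> - 1)"
    using Q1 by (simp add: Q0_def c_def coeff_eq_0)
  ultimately show ?case unfolding T_def by blast
qed


lemma alt_pascal:
  fixes f :: "nat \<Rightarrow> rat"
  shows "(\<Sum>k\<le>Suc n. (-1)^k * of_nat (Suc n choose k) * f k)
       = (\<Sum>k\<le>n. (-1)^k * of_nat (n choose k) * (f k - f (Suc k)))"
proof -
  have A: "(\<Sum>k\<le>Suc n. (-1)^k * of_nat (Suc n choose k) * f k)
      = f 0 - (\<Sum>k\<le>n. (-1)^k * of_nat (n choose k) * f (Suc k))
            - (\<Sum>k\<le>n. (-1)^k * of_nat (n choose Suc k) * f (Suc k))"
    by (subst sum.atMost_Suc_shift) (simp add: algebra_simps sum.distrib sum_subtractf sum_negf)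
  have B: "(\<Sum>k\<le>n. (-1)^k * of_nat (n choose k) * f k)
      = f 0 - (\<Sum>k\<le>n. (-1)^k * of_nat (n choose Suc k) * f (Suc k))"
  proof -
    have "(\<Sum>k\<le>n. (-1)^k * of_nat (n choose k) * f k) = (\<Sum>k\<le>Suc n. (-1)^k * of_nat (n choose k) * f k)"
      by simp
    also have "\<dots> = f 0 - (\<Sum>k\<le>n. (-1)^k * of_nat (n choose Suc k) * f (Suc k))"
      by (subst sum.atMost_Suc_shift) (simp add: sum_negf[symmetric])
    finally show ?thesis .
  qed
  show ?thesis using A B by (simp add: algebra_simps sum_subtractf)
qed

lemma fin_diff:
  "degree (p::rat poly) < n \<Longrightarrow> (\<Sum>k\<le>n. (-1)^k * of_nat (n choose k) * poly p (of_nat k)) = 0"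
proof (induction n arbitrary: p)
  case 0 then show ?case by simp
next
  case (Suc n)
  define q where "q = p - pcompose p [:1,1:]"
  have dp: "degree p \<le> n" using Suc.prems by simp
  have dq: "degree q \<le> n" unfolding q_def using dp shift_deg[of p 1]
    by (simp add: degree_diff_le)
  have cq: "coeff q n = 0" unfolding q_def using shift_coeff[OF dp, of 1] by simp
  have pq: "poly q (of_nat k) = poly p (of_nat k) - poly p (of_nat (Suc k))" for k
    unfolding q_def by (simp add: poly_pcompose add.commute)
  have "(\<Sum>k\<le>Suc n. (-1)^k * of_nat (Suc n choose k) * poly p (of_nat k))
      = (\<Sum>k\<le>n. (-1)^k * of_nat (n choose k) * poly q (of_nat k))"
    unfolding alt_pascal pq by simp
  also have "\<dots> = 0"
  proof (cases n)
    case 0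
    then have "q = 0" using top_zero_deg[OF dq cq] by simp
    then show ?thesis by simp
  next
    case (Suc m)
    then have "degree q < n" using top_zero_deg[OF dq cq] by simp
    then show ?thesis using Suc.IH by blast
  qed
  finally show ?case .
qed

definition abP :: "nat \<Rightarrow> rat poly" where
  "abP n = (\<Sum>k\<le>n. smult (of_nat (n choose k) * (1 + of_nat k)^(k-1)) ([:- of_nat k, 1:]^(n-k)))"

lemma smult_sum2: "smult c (sum f A) = (\<Sum>x\<in>A. smult c (f x))"
  by (induction A rule: infinite_finite_induct) (simp_all add: smult_add_right)

lemma pderiv_sum': "pderiv (sum f A) = (\<Sum>x\<in>A. pderiv (f x))"
  using higher_pderiv_sum[of 1 f A] by simp

lemma abP_deriv: "pderiv (abP (Suc n)) = smult (of_nat (Suc n)) (abP n)"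
proof -
  have "pderiv (abP (Suc n)) = (\<Sum>k\<le>Suc n. smult (of_nat (Suc n choose k) * (1 + of_nat k)^(k-1) * of_nat (Suc n - k))
            ([:- of_nat k, 1:]^(Suc n - k - 1)))"
    unfolding abP_def pderiv_sum' by (intro sum.cong refl) (simp add: pderiv_smult pderiv_power pderiv_pCons)
  also have "\<dots> = (\<Sum>k\<le>n. smult (of_nat (Suc n choose k) * (1 + of_nat k)^(k-1) * of_nat (Suc n - k))
            ([:- of_nat k, 1:]^(Suc n - k - 1)))"
    by simp
  also have "\<dots> = (\<Sum>k\<le>n. smult (of_nat (Suc n)) (smult (of_nat (n choose k) * (1 + of_nat k)^(k-1))
            ([:- of_nat k, 1:]^(n - k))))"
  proof (intro sum.cong refl)
    fix k assume "k \<in> {..n}"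
    have "(Suc n - k) * (Suc n choose k) = Suc n * (n choose k)"
      using binomial_absorb_comp[of "Suc n" k] by simp
    then have F: "(of_nat (Suc n choose k) :: rat) * of_nat (Suc n - k) = of_nat (Suc n) * of_nat (n choose k)"
      by (metis mult.commute of_nat_mult)
    have c: "(of_nat (Suc n choose k) * (1 + of_nat k)^(k-1) * of_nat (Suc n - k) :: rat)
        = of_nat (Suc n) * (of_nat (n choose k) * (1 + of_nat k)^(k-1))"
    proof -
      have "(of_nat (Suc n choose k) * (1 + of_nat k)^(k-1) * of_nat (Suc n - k) :: rat)
          = (of_nat (Suc n choose k) * of_nat (Suc n - k)) * (1 + of_nat k)^(k-1)" by (simp only: mult_ac)
      also have "\<dots> = (of_nat (Suc n) * of_nat (n choose k)) * (1 + of_nat k)^(k-1)" by (simp only: F)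
      finally show ?thesis by (simp only: mult_ac)
    qed
    have e: "Suc n - k - 1 = n - k" by simp
    show "smult (of_nat (Suc n choose k) * (1 + of_nat k)^(k-1) * of_nat (Suc n - k))
            ([:- of_nat k, 1::rat:]^(Suc n - k - 1)) = smult (of_nat (Suc n)) (smult (of_nat (n choose k) * (1 + of_nat k)^(k-1))
            ([:- of_nat k, 1:]^(n - k)))"
      unfolding e smult_smult c ..
  qed
  also have "\<dots> = smult (of_nat (Suc n)) (abP n)"
    unfolding abP_def by (simp add: smult_sum2)
  finally show ?thesis .
qed

lemma abP_m1: "poly (abP (Suc n)) (-1) = 0"
proof -
  let ?m = "Suc n"
  have "poly (abP ?m) (-1) = (\<Sum>k\<le>?m. of_nat (?m choose k) * (1 + of_nat k)^(k-1) * (- of_nat k - 1)^(?m-k))"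
    unfolding abP_def by (simp add: poly_sum)
  also have "\<dots> = (\<Sum>k\<le>?m. (-1)^?m * ((-1)^k * of_nat (?m choose k) * poly ([:1,1:]^n) (of_nat k)))"
  proof (intro sum.cong refl)
    fix k assume "k \<in> {..?m}"
    then have km: "k \<le> ?m" by simp
    have "(- of_nat k - 1 :: rat) = -(1 + of_nat k)" by simp
    then have e1: "(- of_nat k - 1 :: rat)^(?m-k) = (-1)^(?m-k) * (1 + of_nat k)^(?m-k)"
      by (metis power_minus)
    have e2: "(-1::rat)^(?m-k) = (-1)^?m * (-1)^k"
    proof -
      have "(-1::rat)^(?m-k) = (-1)^?m / (-1)^k" by (rule power_diff) (use km in auto)
      also have "\<dots> = (-1)^?m * (-1)^k" by (cases "even k") auto
      finally show ?thesis .
    qed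
    have e3: "(1 + of_nat k :: rat)^(k-1) * (1 + of_nat k)^(?m-k) = (1 + of_nat k)^n"
    proof (cases k)
      case 0 then show ?thesis by simp
    next
      case (Suc j)
      then have "k - 1 + (?m - k) = n" using km by simp
      then show ?thesis by (metis power_add)
    qed
    have e4: "poly ([:1,1:]^n) (of_nat k) = (1 + of_nat k :: rat)^n" by (simp add: poly_power)
    show "of_nat (?m choose k) * (1 + of_nat k)^(k-1) * (- of_nat k - 1)^(?m-k)
        = (-1)^?m * ((-1)^k * of_nat (?m choose k) * poly ([:1,1::rat:]^n) (of_nat k))"
      unfolding e1 e2 e4 e3[symmetric] by (simp only: mult_ac)
  qed
  also have "\<dots> = (-1)^?m * (\<Sum>k\<le>?m. (-1)^k * of_nat (?m choose k) * poly ([:1,1:]^n) (of_nat k))"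
    by (rule sum_distrib_left[symmetric])
  moreover have "(\<Sum>k\<le>?m. (-1)^k * of_nat (?m choose k) * poly ([:1,1::rat:]^n) (of_nat k)) = 0"
    by (rule fin_diff) (simp add: degree_power_le order.strict_trans1[OF degree_power_le])
  ultimately show ?thesis by simp
qed

lemma abP_eq: "abP n = [:1,1:]^n"
proof (induction n)
  case 0 then show ?case by (simp add: abP_def)
next
  case (Suc n)
  have "pderiv (abP (Suc n) - [:1,1:]^Suc n) = 0"
    by (simp add: pderiv_diff abP_deriv Suc pderiv_power_Suc pderiv_pCons del: power_Suc)
  then obtain h where h: "abP (Suc n) - [:1,1:]^Suc n = [:h:]" using pderiv_iszero by blast
  have "h = poly (abP (Suc n) - [:1,1:]^Suc n) (-1)" using h by simp
  also have "\<dots> = 0 - poly [:1,1:] (-1) ^ Suc n" by (simp only: poly_diff abP_m1 poly_power)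
  also have "\<dots> = 0" by simp
  finally have "h = 0" .
  then show ?case using h by simp
qed

lemma abel1: "(\<Sum>k\<le>n. of_nat (n choose k) * (1 + of_nat k)^(k-1) * (y - of_nat k)^(n-k)) = (1 + y::rat)^n"
proof -
  have "poly (abP n) y = poly ([:1,1:]^n) y" by (simp add: abP_eq)
  then show ?thesis unfolding abP_def by (simp add: poly_sum poly_power add.commute)
qed


definition cc :: "nat \<Rightarrow> rat" where
  "cc j = of_nat ((j+1)^(j-1)) / of_nat (fact (j+1))"

lemma cc_pos: "cc j > 0"
  unfolding cc_def by (intro divide_pos_pos) (simp_all only: of_nat_0_less_iff, simp, rule fact_gt_zero)

lemma h1: "(u::rat) \<noteq> 0 \<Longrightarrow> a/(u*f)*u = a/f"
  by (cases "f = 0") (simp_all add: field_simps)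
lemma h2: "(u::rat) \<noteq> 0 \<Longrightarrow> a/(u*f)*u^2 = a*u/f"
  by (cases "f = 0") (simp_all add: field_simps power2_eq_square)
lemma h3: "(u::rat) \<noteq> 0 \<Longrightarrow> v \<noteq> 0 \<Longrightarrow> v*u*(a/(u*(v*f))) = a/f"
  by (cases "f = 0") (simp_all add: field_simps)

lemma fact_of: "(of_nat (fact (j+1)) :: rat) = of_nat (j+1) * fact j"
  by (metis Suc_eq_plus1 fact_Suc of_nat_fact)

lemma nz: "(of_nat (j+1) :: rat) \<noteq> 0" by simp

lemma cc_t1: "cc j * of_nat (j+1) = of_nat (j+1)^(j-1) / fact j"
  unfolding cc_def fact_of of_nat_power by (rule h1[OF nz])

lemma cc_t2: "cc l * of_nat (l+1)^2 = of_nat (l+1)^l / fact l"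
proof -
  have p: "(of_nat (l+1) :: rat)^(l-1) * of_nat (l+1) = of_nat (l+1)^l"
    by (cases l) simp_all
  have "cc l * of_nat (l+1)^2 = of_nat (l+1)^(l-1) * of_nat (l+1) / fact l"
    unfolding cc_def fact_of of_nat_power by (rule h2[OF nz])
  then show ?thesis using p by simp
qed

lemma cc_identity:
  "(\<Sum>j<Suc n. cc j * cc (n - j) * of_nat (j+1) * of_nat (Suc n - j)^2)
     = of_nat (Suc n) * of_nat (Suc n + 1) * cc (Suc n)"
proof -
  have "(\<Sum>j<Suc n. cc j * cc (n - j) * of_nat (j+1) * of_nat (Suc n - j)^2)
      = (\<Sum>j\<le>n. (of_nat (n choose j) * (1 + of_nat j)^(j-1) * (of_nat (Suc n) - of_nat j)^(n-j)) / fact n)"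
  proof (intro sum.cong)
    fix j assume "j \<in> {..n}"
    then have jn: "j \<le> n" by simp
    have a: "cc j * of_nat (j+1) = (1 + of_nat j)^(j-1) / fact j" using cc_t1[of j] by simp
    have b: "cc (n-j) * of_nat (Suc n - j)^2 = (of_nat (Suc n) - of_nat j)^(n-j) / fact (n-j)"
    proof -
      have e: "Suc n - j = (n - j) + 1" using jn by simp
      have e2: "(of_nat ((n-j)+1) :: rat) = of_nat (Suc n) - of_nat j" using jn by (simp add: of_nat_diff)
      show ?thesis by (simp only: e e2[symmetric] cc_t2)
    qed
    have c: "(of_nat (n choose j) :: rat) = fact n / (fact j * fact (n-j))" using binomial_fact[OF jn] .
    have "cc j * cc (n - j) * of_nat (j+1) * of_nat (Suc n - j)^2
        = (cc j * of_nat (j+1)) * (cc (n-j) * of_nat (Suc n - j)^2)" by (simp only: mult_ac)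
    also have "\<dots> = (1 + of_nat j)^(j-1) / fact j * ((of_nat (Suc n) - of_nat j)^(n-j) / fact (n-j))"
      by (simp only: a b)
    also have "\<dots> = (of_nat (n choose j) * (1 + of_nat j)^(j-1) * (of_nat (Suc n) - of_nat j)^(n-j)) / fact n"
      unfolding c by (simp add: field_simps)
    finally show "cc j * cc (n - j) * of_nat (j+1) * of_nat (Suc n - j)^2
        = (of_nat (n choose j) * (1 + of_nat j)^(j-1) * (of_nat (Suc n) - of_nat j)^(n-j)) / fact n" .
  qed (auto simp: lessThan_Suc_atMost)
  also have "\<dots> = (\<Sum>j\<le>n. of_nat (n choose j) * (1 + of_nat j)^(j-1) * (of_nat (Suc n) - of_nat j)^(n-j)) / fact n"
    by (simp add: sum_divide_distrib)
  also have "\<dots> = (1 + of_nat (Suc n))^n / fact n" by (simp only: abel1)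
  also have "\<dots> = of_nat (Suc n) * of_nat (Suc n + 1) * cc (Suc n)"
  proof -
    have f2: "(of_nat (fact (Suc n + 1)) :: rat) = of_nat (Suc n + 1) * (of_nat (Suc n) * fact n)"
      by (simp only: fact_of) (metis Suc_eq_plus1 fact_Suc)
    have "of_nat (Suc n) * of_nat (Suc n + 1) * cc (Suc n) = of_nat (Suc n + 1)^n / fact n"
      unfolding cc_def f2 of_nat_power by (simp only: diff_Suc_1 h3[OF nz nz[of n, unfolded Suc_eq_plus1[symmetric]]])
    then show ?thesis by simp
  qed
  finally show ?thesis .
qed


type_synonym ep = "nat \<Rightarrow> rat poly"

definition ev :: "nat \<Rightarrow> ep \<Rightarrow> nat \<Rightarrow> rat" where
  "ev M E n = (\<Sum>r\<le>M. poly (E r) (of_nat n) * of_nat r ^ n)"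

definition sup_in :: "nat \<Rightarrow> ep \<Rightarrow> bool" where
  "sup_in M E \<longleftrightarrow> (\<forall>r. (r = 0 \<or> M < r) \<longrightarrow> E r = 0)"

lemma ev_mono: "sup_in M E \<Longrightarrow> M \<le> M' \<Longrightarrow> ev M' E n = ev M E n"
  unfolding ev_def sup_in_def by (rule sum.mono_neutral_right) auto

definition eadd :: "ep \<Rightarrow> ep \<Rightarrow> ep" where "eadd E1 E2 = (\<lambda>r. E1 r + E2 r)"
definition esm :: "rat \<Rightarrow> ep \<Rightarrow> ep" where "esm c E = (\<lambda>r. smult c (E r))"
definition eshp :: "nat \<Rightarrow> ep \<Rightarrow> ep" where
  "eshp c E = (\<lambda>r. smult (of_nat r ^ c) (pcompose (E r) [:of_nat c, 1:]))"
definition eshm :: "ep \<Rightarrow> ep" where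
  "eshm E = (\<lambda>r. smult (1 / of_nat r) (pcompose (E r) [:-1, 1:]))"
definition emul :: "ep \<Rightarrow> ep" where "emul E = (\<lambda>r. E r * [:-2, 1:])"
definition econst :: "rat \<Rightarrow> ep" where "econst c = (\<lambda>r. if r = 1 then [:c:] else 0)"

lemma ev_eadd: "ev M (eadd E1 E2) n = ev M E1 n + ev M E2 n"
  unfolding ev_def eadd_def by (simp add: sum.distrib algebra_simps)
lemma ev_esm: "ev M (esm c E) n = c * ev M E n"
  unfolding ev_def esm_def by (simp add: sum_distrib_left algebra_simps)
lemma ev_eshp: "ev M (eshp c E) n = ev M E (n + c)"
  unfolding ev_def eshp_def by (intro sum.cong refl) (simp add: poly_pcompose power_add algebra_simps)
lemma ev_eshm:
  assumes "sup_in M E" "n \<ge> 1"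
  shows "ev M (eshm E) n = ev M E (n - 1)"
  unfolding ev_def eshm_def
proof (intro sum.cong refl)
  fix r assume "r \<in> {..M}"
  show "poly (smult (1 / of_nat r) (pcompose (E r) [:-1, 1:])) (of_nat n) * of_nat r ^ n =
        poly (E r) (of_nat (n - 1)) * of_nat r ^ (n - 1)"
  proof (cases "r = 0")
    case True then show ?thesis using assms(1) unfolding sup_in_def by simp
  next
    case False
    have "(of_nat r :: rat) ^ n = of_nat r * of_nat r ^ (n-1)" using assms(2)
      by (metis Suc_diff_le diff_Suc_1 power_Suc)
    moreover have "(of_nat (n - 1) :: rat) = of_nat n - 1" using assms(2) by (simp add: of_nat_diff)
    ultimately show ?thesis using False by (simp add: poly_pcompose algebra_simps)
  qed
qed
lemma ev_emul: "ev M (emul E) n = (of_nat n - 2) * ev M E n"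
  unfolding ev_def emul_def by (simp add: sum_distrib_left algebra_simps)
lemma ev_econst: "M \<ge> 1 \<Longrightarrow> ev M (econst c) n = c"
proof -
  assume "M \<ge> 1"
  then have "ev M (econst c) n = (\<Sum>r\<in>{1}. poly (econst c r) (of_nat n) * of_nat r ^ n)"
    unfolding ev_def by (intro sum.mono_neutral_right) (auto simp: econst_def)
  then show ?thesis by (simp add: econst_def)
qed

lemma sup_eadd: "sup_in M E1 \<Longrightarrow> sup_in M E2 \<Longrightarrow> sup_in M (eadd E1 E2)"
  unfolding sup_in_def eadd_def by simp
lemma sup_esm: "sup_in M E \<Longrightarrow> sup_in M (esm c E)"
  unfolding sup_in_def esm_def by simp
lemma sup_eshp: "sup_in M E \<Longrightarrow> sup_in M (eshp c E)"
  unfolding sup_in_def eshp_def by simp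
lemma sup_eshm: "sup_in M E \<Longrightarrow> sup_in M (eshm E)"
  unfolding sup_in_def eshm_def by simp
lemma sup_emul: "sup_in M E \<Longrightarrow> sup_in M (emul E)"
  unfolding sup_in_def emul_def by simp
lemma sup_econst: "M \<ge> 1 \<Longrightarrow> sup_in M (econst c)"
  unfolding sup_in_def econst_def by simp
lemma sup_mono: "sup_in M E \<Longrightarrow> M \<le> M' \<Longrightarrow> sup_in M' E"
  unfolding sup_in_def by simp


definition CRs :: "rat \<Rightarrow> rat \<Rightarrow> rat poly \<Rightarrow> rat poly \<Rightarrow> rat poly \<Rightarrow> bool" where
  "CRs x y p q R \<longleftrightarrow> degree R \<le> degree p + degree q \<and>
     coeff R (degree p + degree q) = coeff p (degree p) * coeff q (degree q) * x^(degree p) * y^(degree q)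
        / (x+y)^(degree p + degree q) \<and>
     (\<forall>N. cs x y p q N = poly R (of_nat N) * (x+y)^N)"

definition CR :: "rat \<Rightarrow> rat \<Rightarrow> rat poly \<Rightarrow> rat poly \<Rightarrow> rat poly" where
  "CR x y p q = (if p = 0 \<or> q = 0 then 0 else (SOME R. CRs x y p q R))"

lemma CR_zero: "p = 0 \<or> q = 0 \<Longrightarrow> CR x y p q = 0"
  unfolding CR_def by auto

lemma CR_spec: "x + y \<noteq> 0 \<Longrightarrow> CRs x y p q (CR x y p q)"
proof (cases "p = 0 \<or> q = 0")
  case True
  then show ?thesis unfolding CR_def CRs_def by (auto simp: cs_zero1 cs_zero2)
next
  case False
  assume xy: "x + y \<noteq> 0"
  have "CG x y p q (degree p) (degree q)" by (rule CG_all[OF xy order.refl order.refl])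
  then have "\<exists>R. CRs x y p q R" unfolding CG_def CRs_def .
  then show ?thesis using False unfolding CR_def by (simp add: someI_ex)
qed

lemma CR_val: "x + y \<noteq> 0 \<Longrightarrow> cs x y p q N = poly (CR x y p q) (of_nat N) * (x+y)^N"
  using CR_spec unfolding CRs_def by blast

lemma CR_bound:
  assumes xy: "x + y \<noteq> 0" and a: "degree p \<le> a" and b: "degree q \<le> b"
  shows "degree (CR x y p q) \<le> a + b \<and>
         coeff (CR x y p q) (a+b) = coeff p a * coeff q b * x^a * y^b / (x+y)^(a+b)"
proof -
  have s: "CRs x y p q (CR x y p q)" by (rule CR_spec[OF xy])
  show ?thesis
  proof (cases "degree p = a \<and> degree q = b")
    case True then show ?thesis using s unfolding CRs_def by simp
  next
    case False
    then have lt: "degree p + degree q < a + b" using a b by auto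
    have "degree (CR x y p q) < a + b" using s lt unfolding CRs_def by simp
    moreover have "coeff p a = 0 \<or> coeff q b = 0" using False a b by (auto simp: coeff_eq_0)
    ultimately show ?thesis by (auto simp: coeff_eq_0)
  qed
qed

definition econv :: "ep \<Rightarrow> ep \<Rightarrow> ep" where
  "econv E1 E2 = (\<lambda>r. \<Sum>x\<le>r. CR (of_nat x) (of_nat (r-x)) (E1 x) (E2 (r-x)))"

lemma sup_econv: "sup_in M1 E1 \<Longrightarrow> sup_in M2 E2 \<Longrightarrow> sup_in (M1+M2) (econv E1 E2)"
  unfolding sup_in_def econv_def
proof (intro allI impI)
  fix r assume h1: "\<forall>r. r = 0 \<or> M1 < r \<longrightarrow> E1 r = 0" and h2: "\<forall>r. r = 0 \<or> M2 < r \<longrightarrow> E2 r = 0"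
    and r: "r = 0 \<or> M1 + M2 < r"
  show "(\<Sum>x\<le>r. CR (of_nat x) (of_nat (r - x)) (E1 x) (E2 (r - x))) = 0"
  proof (intro sum.neutral ballI)
    fix x assume "x \<in> {..r}"
    then have "E1 x = 0 \<or> E2 (r - x) = 0" using h1 h2 r by (cases "x \<le> M1") auto
    then show "CR (of_nat x) (of_nat (r - x)) (E1 x) (E2 (r - x)) = 0" by (rule CR_zero)
  qed
qed

lemma ev_econv:
  assumes s1: "sup_in M1 E1" and s2: "sup_in M2 E2"
  shows "ev (M1+M2) (econv E1 E2) N =
         (\<Sum>s\<le>N. of_nat (N choose s) * ev M1 E1 s * ev M2 E2 (N - s))"
proof -
  define G where "G x y = poly (CR (of_nat x) (of_nat y) (E1 x) (E2 y)) (of_nat N) * (of_nat x + of_nat y :: rat)^N" for x y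
  have Gz: "G x y = 0" if "E1 x = 0 \<or> E2 y = 0" for x y
    unfolding G_def using CR_zero[OF that] by simp
  have csG: "cs (of_nat x) (of_nat y) (E1 x) (E2 y) N = G x y" for x y
  proof (cases "E1 x = 0 \<or> E2 y = 0")
    case True then show ?thesis using Gz[OF True] by (auto simp: cs_zero1 cs_zero2)
  next
    case False
    have z: "E1 0 = 0" "E2 0 = 0" using s1 s2 unfolding sup_in_def by auto
    then have "x \<noteq> 0" "y \<noteq> 0" using False by (metis, metis)
    then have "(of_nat x + of_nat y :: rat) \<noteq> 0" by simp
    then show ?thesis unfolding G_def by (rule CR_val)
  qed
  have "(\<Sum>s\<le>N. of_nat (N choose s) * ev M1 E1 s * ev M2 E2 (N - s))
      = (\<Sum>s\<le>N. \<Sum>x\<le>M1. \<Sum>y\<le>M2. of_nat (N choose s) * (poly (E1 x) (of_nat s) * of_nat x ^ s)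
                * (poly (E2 y) (of_nat (N - s)) * of_nat y ^ (N - s)))"
    unfolding ev_def by (simp add: sum_distrib_left sum_distrib_right mult.assoc) (rule sum.cong[OF refl], rule sum.swap)
  also have "\<dots> = (\<Sum>x\<le>M1. \<Sum>y\<le>M2. \<Sum>s\<le>N. of_nat (N choose s) * (poly (E1 x) (of_nat s) * of_nat x ^ s)
                * (poly (E2 y) (of_nat (N - s)) * of_nat y ^ (N - s)))"
    by (subst sum.swap, rule sum.cong[OF refl], rule sum.swap)
  also have "\<dots> = (\<Sum>x\<le>M1. \<Sum>y\<le>M2. G x y)"
    by (simp only: csG[symmetric] cs_def)
  also have "\<dots> = (\<Sum>(x,y)\<in>{..M1}\<times>{..M2}. G x y)"
    by (simp add: sum.cartesian_product)
  also have "\<dots> = (\<Sum>(x,y)\<in>{(x,y). x + y \<le> M1 + M2}. G x y)"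
  proof (rule sum.mono_neutral_left)
    show "finite {(x, y). x + y \<le> M1 + M2}"
      by (rule finite_subset[of _ "{..M1+M2} \<times> {..M1+M2}"]) auto
    show "{..M1} \<times> {..M2} \<subseteq> {(x, y). x + y \<le> M1 + M2}" by auto
    show "\<forall>i\<in>{(x, y). x + y \<le> M1 + M2} - {..M1} \<times> {..M2}. (case i of (x, y) \<Rightarrow> G x y) = 0"
    proof
      fix i assume "i \<in> {(x, y). x + y \<le> M1 + M2} - {..M1} \<times> {..M2}"
      then obtain x y where i: "i = (x,y)" "x > M1 \<or> y > M2" by (cases i) (auto simp: not_le)
      then have "E1 x = 0 \<or> E2 y = 0" using s1 s2 unfolding sup_in_def by auto
      then show "(case i of (x, y) \<Rightarrow> G x y) = 0" using Gz i by simp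
    qed
  qed
  also have "\<dots> = (\<Sum>r\<le>M1+M2. \<Sum>x\<le>r. G x (r - x))"
    by (rule sum.triangle_reindex_eq)
  also have "\<dots> = ev (M1+M2) (econv E1 E2) N"
    unfolding ev_def econv_def G_def
    by (intro sum.cong refl) (simp add: poly_sum sum_distrib_right)
  finally show ?thesis by simp
qed


definition ADs :: "nat \<Rightarrow> nat \<Rightarrow> rat poly \<Rightarrow> rat poly \<Rightarrow> bool" where
  "ADs r d p Q \<longleftrightarrow>
     (if r = 1 then degree Q \<le> d+1 \<and> coeff Q (d+1) = coeff p d / of_nat (d+1)
      else degree Q \<le> d \<and> coeff Q d = coeff p d * of_nat r / (of_nat r - 1)) \<and>
     Q - smult (1 / of_nat r) (pcompose Q [:-1,1:]) = p"

definition eAD :: "nat \<Rightarrow> (nat \<Rightarrow> nat) \<Rightarrow> ep \<Rightarrow> ep" where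
  "eAD M Df E = (\<lambda>r. if r = 0 \<or> M < r then 0 else (SOME Q. ADs r (Df r) (E r) Q))"

lemma ADs_ex: "r \<ge> 1 \<Longrightarrow> degree p \<le> d \<Longrightarrow> \<exists>Q. ADs r d p Q"
proof -
  assume r: "r \<ge> 1" and dp: "degree p \<le> d"
  show ?thesis
  proof (cases "r = 1")
    case True
    then show ?thesis using AD1_ex[OF dp] unfolding AD1P_def ADs_def by simp
  next
    case False
    have "(of_nat r :: rat) \<noteq> 1" "(of_nat r :: rat) \<noteq> 0" using r False by auto
    from AD2_ex[OF this dp] show ?thesis using False unfolding ADs_def by simp
  qed
qed

lemma eAD_spec: "1 \<le> r \<Longrightarrow> r \<le> M \<Longrightarrow> degree (E r) \<le> Df r \<Longrightarrow> ADs r (Df r) (E r) (eAD M Df E r)"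
proof -
  assume a: "1 \<le> r" "r \<le> M" "degree (E r) \<le> Df r"
  have "\<exists>Q. ADs r (Df r) (E r) Q" by (rule ADs_ex[OF a(1) a(3)])
  then have "ADs r (Df r) (E r) (SOME Q. ADs r (Df r) (E r) Q)" by (rule someI_ex)
  then show ?thesis unfolding eAD_def using a by simp
qed

lemma sup_eAD: "sup_in M (eAD M Df E)"
  unfolding sup_in_def eAD_def by simp

lemma alg1: "(R::rat) \<noteq> 0 \<Longrightarrow> p = q1 - (1/R)*q0 \<Longrightarrow> q1 * (R*P) - q0 * P = p * (R*P)"
  by (simp add: field_simps) (metis distrib_left)

lemma ev_eAD:
  assumes s: "sup_in M E" and d: "\<forall>r. degree (E r) \<le> Df r" and n: "n \<ge> 1"
  shows "ev M (eAD M Df E) n - ev M (eAD M Df E) (n - 1) = ev M E n"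
proof -
  have "ev M (eAD M Df E) n - ev M (eAD M Df E) (n - 1)
      = (\<Sum>r\<le>M. poly (eAD M Df E r) (of_nat n) * of_nat r ^ n - poly (eAD M Df E r) (of_nat (n-1)) * of_nat r ^ (n-1))"
    unfolding ev_def by (simp add: sum_subtractf)
  also have "\<dots> = ev M E n"
    unfolding ev_def
  proof (intro sum.cong refl)
    fix r assume "r \<in> {..M}"
    then have rM: "r \<le> M" by simp
    show "poly (eAD M Df E r) (of_nat n) * of_nat r ^ n - poly (eAD M Df E r) (of_nat (n-1)) * of_nat r ^ (n-1)
        = poly (E r) (of_nat n) * of_nat r ^ n"
    proof (cases "r = 0")
      case True then show ?thesis using s unfolding sup_in_def eAD_def by simp
    next
      case False
      then have r1: "r \<ge> 1" by simp
      let ?Q = "eAD M Df E r"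
      have dr: "degree (E r) \<le> Df r" using d by simp
      have A: "?Q - smult (1 / of_nat r) (pcompose ?Q [:-1,1:]) = E r"
        using eAD_spec[of r M E Df, OF r1 rM dr] unfolding ADs_def by simp
      have "poly (E r) (of_nat n) = poly ?Q (of_nat n) - (1 / of_nat r) * poly ?Q (of_nat n - 1)"
        by (simp add: A[symmetric] poly_pcompose)
      moreover have "(of_nat (n - 1) :: rat) = of_nat n - 1" using n by (simp add: of_nat_diff)
      moreover have "(of_nat r :: rat) ^ n = of_nat r * of_nat r ^ (n-1)" using n
        by (metis Suc_diff_le diff_Suc_1 power_Suc)
      moreover have "(of_nat r :: rat) \<noteq> 0" using False by simp
      ultimately show ?thesis using alg1 by metis
    qed
  qed
  finally show ?thesis .
qed

definition DB :: "nat \<Rightarrow> (nat \<Rightarrow> nat) \<Rightarrow> ep \<Rightarrow> bool" where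
  "DB M Df E \<longleftrightarrow> sup_in M E \<and> (\<forall>r. degree (E r) \<le> Df r)"
definition GD :: "nat \<Rightarrow> (nat \<Rightarrow> nat) \<Rightarrow> (nat \<Rightarrow> rat) \<Rightarrow> ep \<Rightarrow> bool" where
  "GD M Df sg E \<longleftrightarrow> DB M Df E \<and> (\<forall>r. 0 \<le> sg r * coeff (E r) (Df r))"
definition SP :: "nat \<Rightarrow> (nat \<Rightarrow> nat) \<Rightarrow> (nat \<Rightarrow> rat) \<Rightarrow> ep \<Rightarrow> bool" where
  "SP r0 Df sg E \<longleftrightarrow> 0 < sg r0 * coeff (E r0) (Df r0)"

lemma eadd_apply[simp]: "eadd E1 E2 r = E1 r + E2 r" by (simp add: eadd_def)
lemma esm_apply[simp]: "esm c E r = smult c (E r)" by (simp add: esm_def)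

lemma DB_eadd: "DB M Df E1 \<Longrightarrow> DB M Df E2 \<Longrightarrow> DB M Df (eadd E1 E2)"
  unfolding DB_def using sup_eadd by (auto intro: degree_add_le)
lemma GD_eadd: "GD M Df sg E1 \<Longrightarrow> GD M Df sg E2 \<Longrightarrow> GD M Df sg (eadd E1 E2)"
  unfolding GD_def using DB_eadd by (auto simp: distrib_left)
lemma SP_eadd1: "SP r0 Df sg E1 \<Longrightarrow> GD M Df sg E2 \<Longrightarrow> SP r0 Df sg (eadd E1 E2)"
  unfolding GD_def SP_def by (simp add: distrib_left add_pos_nonneg)
lemma SP_eadd2: "GD M Df sg E1 \<Longrightarrow> SP r0 Df sg E2 \<Longrightarrow> SP r0 Df sg (eadd E1 E2)"
  unfolding GD_def SP_def by (simp add: distrib_left add_nonneg_pos)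

lemma DB_esm: "DB M Df E \<Longrightarrow> DB M Df (esm c E)"
  unfolding DB_def using sup_esm by (auto intro: order_trans[OF degree_smult_le])
lemma GD_esm_pos: "GD M Df sg E \<Longrightarrow> 0 \<le> c \<Longrightarrow> GD M Df sg (esm c E)"
  unfolding GD_def using DB_esm by (auto simp: mult.left_commute[of _ c])
lemma GD_esm_neg: "GD M Df sg E \<Longrightarrow> c \<le> 0 \<Longrightarrow> GD M Df (\<lambda>r. - sg r) (esm c E)"
  unfolding GD_def
proof (intro conjI allI)
  assume h: "DB M Df E \<and> (\<forall>r. 0 \<le> sg r * coeff (E r) (Df r))" and c: "c \<le> 0"
  show "DB M Df (esm c E)" using h DB_esm by blast
  fix r
  have eq: "- sg r * coeff (esm c E r) (Df r) = (- c) * (sg r * coeff (E r) (Df r))"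
    by (simp add: algebra_simps)
  have X: "0 \<le> sg r * coeff (E r) (Df r)" using h by blast
  have "0 \<le> - c" using c by simp
  have "0 \<le> (- c) * (sg r * coeff (E r) (Df r))" by (rule mult_nonneg_nonneg[OF \<open>0 \<le> - c\<close> X])
  then show "0 \<le> - sg r * coeff (esm c E r) (Df r)" unfolding eq .
qed
lemma SP_esm_pos: "SP r0 Df sg E \<Longrightarrow> 0 < c \<Longrightarrow> SP r0 Df sg (esm c E)"
  unfolding SP_def by (simp add: mult.left_commute[of _ c])
lemma SP_esm_neg: "SP r0 Df sg E \<Longrightarrow> c < 0 \<Longrightarrow> SP r0 Df (\<lambda>r. - sg r) (esm c E)"
proof -
  assume h: "SP r0 Df sg E" and c: "c < 0"
  have eq: "- sg r0 * coeff (esm c E r0) (Df r0) = (- c) * (sg r0 * coeff (E r0) (Df r0))"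
    by (simp add: algebra_simps)
  have X: "0 < sg r0 * coeff (E r0) (Df r0)" using h unfolding SP_def by blast
  have "0 < - c" using c by simp
  have "0 < (- c) * (sg r0 * coeff (E r0) (Df r0))" by (rule mult_pos_pos[OF \<open>0 < - c\<close> X])
  then show ?thesis unfolding SP_def eq .
qed

lemma eshp_deg: "degree (eshp c E r) \<le> degree (E r)"
  unfolding eshp_def using shift_deg by (metis degree_smult_le)
lemma eshp_coeff: "degree (E r) \<le> d \<Longrightarrow> coeff (eshp c E r) d = of_nat r ^ c * coeff (E r) d"
  unfolding eshp_def by (simp add: shift_coeff)
lemma DB_eshp: "DB M Df E \<Longrightarrow> DB M Df (eshp c E)"
  unfolding DB_def
proof (intro conjI allI)
  assume h: "sup_in M E \<and> (\<forall>r. degree (E r) \<le> Df r)"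
  show "sup_in M (eshp c E)" using h sup_eshp by blast
  fix r show "degree (eshp c E r) \<le> Df r" using h eshp_deg[of c E r] by (meson order_trans)
qed
lemma GD_eshp: "GD M Df sg E \<Longrightarrow> GD M Df sg (eshp c E)"
  unfolding GD_def
proof (intro conjI allI)
  assume h: "DB M Df E \<and> (\<forall>r. 0 \<le> sg r * coeff (E r) (Df r))"
  show "DB M Df (eshp c E)" using h DB_eshp by blast
  fix r
  have "coeff (eshp c E r) (Df r) = of_nat r ^ c * coeff (E r) (Df r)"
    using h eshp_coeff unfolding DB_def by blast
  then show "0 \<le> sg r * coeff (eshp c E r) (Df r)" using h
    by (simp add: mult.left_commute[of _ "of_nat r ^ c"])
qed
lemma SP_eshp: "SP r0 Df sg E \<Longrightarrow> DB M Df E \<Longrightarrow> r0 \<ge> 1 \<Longrightarrow> SP r0 Df sg (eshp c E)"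
proof -
  assume h: "SP r0 Df sg E" "DB M Df E" "r0 \<ge> 1"
  have "coeff (eshp c E r0) (Df r0) = of_nat r0 ^ c * coeff (E r0) (Df r0)"
    using h eshp_coeff unfolding DB_def by blast
  then show ?thesis using h unfolding SP_def
    by (simp add: mult.left_commute[of _ "of_nat r0 ^ c"])
qed

lemma eshm_deg: "degree (eshm E r) \<le> degree (E r)"
  unfolding eshm_def using shift_deg by (metis degree_smult_le)
lemma eshm_coeff: "degree (E r) \<le> d \<Longrightarrow> coeff (eshm E r) d = (1 / of_nat r) * coeff (E r) d"
  unfolding eshm_def by (simp add: shift_coeff)
lemma DB_eshm: "DB M Df E \<Longrightarrow> DB M Df (eshm E)"
  unfolding DB_def
proof (intro conjI allI)
  assume h: "sup_in M E \<and> (\<forall>r. degree (E r) \<le> Df r)"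
  show "sup_in M (eshm E)" using h sup_eshm by blast
  fix r show "degree (eshm E r) \<le> Df r" using h eshm_deg[of E r] by (meson order_trans)
qed
lemma GD_eshm: "GD M Df sg E \<Longrightarrow> GD M Df sg (eshm E)"
  unfolding GD_def
proof (intro conjI allI)
  assume h: "DB M Df E \<and> (\<forall>r. 0 \<le> sg r * coeff (E r) (Df r))"
  show "DB M Df (eshm E)" using h DB_eshm by blast
  fix r
  have "coeff (eshm E r) (Df r) = (1 / of_nat r) * coeff (E r) (Df r)"
    using h eshm_coeff unfolding DB_def by blast
  then show "0 \<le> sg r * coeff (eshm E r) (Df r)" using h
    by (simp add: mult.left_commute[of _ "1 / of_nat r"])
qed
lemma SP_eshm: "SP r0 Df sg E \<Longrightarrow> DB M Df E \<Longrightarrow> r0 \<ge> 1 \<Longrightarrow> SP r0 Df sg (eshm E)"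
proof -
  assume h: "SP r0 Df sg E" "DB M Df E" "r0 \<ge> 1"
  have "coeff (eshm E r0) (Df r0) = (1 / of_nat r0) * coeff (E r0) (Df r0)"
    using h eshm_coeff unfolding DB_def by blast
  then show ?thesis using h unfolding SP_def
    by (simp add: mult.left_commute[of _ "1 / of_nat r0"])
qed

lemma emul_props: "degree (E r) \<le> d \<Longrightarrow> degree (emul E r) \<le> d + 1 \<and> coeff (emul E r) (d+1) = coeff (E r) d"
  unfolding emul_def by (rule mulx_coeff)
lemma DB_emul: "DB M Df E \<Longrightarrow> DB M (\<lambda>r. Df r + 1) (emul E)"
  unfolding DB_def
proof (intro conjI allI)
  assume h: "sup_in M E \<and> (\<forall>r. degree (E r) \<le> Df r)"
  show "sup_in M (emul E)" using h sup_emul by blast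
  fix r show "degree (emul E r) \<le> Df r + 1" using h emul_props by blast
qed
lemma GD_emul: "GD M Df sg E \<Longrightarrow> GD M (\<lambda>r. Df r + 1) sg (emul E)"
  unfolding GD_def
proof (intro conjI allI)
  assume h: "DB M Df E \<and> (\<forall>r. 0 \<le> sg r * coeff (E r) (Df r))"
  show "DB M (\<lambda>r. Df r + 1) (emul E)" using h DB_emul by blast
  fix r
  have "coeff (emul E r) (Df r + 1) = coeff (E r) (Df r)" using h emul_props unfolding DB_def by blast
  then show "0 \<le> sg r * coeff (emul E r) (Df r + 1)" using h by simp
qed
lemma SP_emul: "SP r0 Df sg E \<Longrightarrow> DB M Df E \<Longrightarrow> SP r0 (\<lambda>r. Df r + 1) sg (emul E)"
proof -
  assume h: "SP r0 Df sg E" "DB M Df E"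
  have "coeff (emul E r0) (Df r0 + 1) = coeff (E r0) (Df r0)" using h emul_props unfolding DB_def by blast
  then show ?thesis using h unfolding SP_def by simp
qed

lemma DB_econst: "M \<ge> 1 \<Longrightarrow> DB M Df (econst c)"
  unfolding DB_def econst_def using sup_econst[of M c] unfolding econst_def by simp
lemma GD_econst: "M \<ge> 1 \<Longrightarrow> Df 1 > 0 \<Longrightarrow> GD M Df sg (econst c)"
  unfolding GD_def using DB_econst[of M Df c] by (auto simp: econst_def coeff_pCons split: nat.splits)

lemma DB_weaken: "DB M Df E \<Longrightarrow> M \<le> M' \<Longrightarrow> (\<forall>r. 1 \<le> r \<longrightarrow> r \<le> M \<longrightarrow> Df r \<le> Df' r) \<Longrightarrow> DB M' Df' E"
  unfolding DB_def sup_in_def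
proof (intro conjI allI impI)
  fix r assume h: "(\<forall>r. r = 0 \<or> M < r \<longrightarrow> E r = 0) \<and> (\<forall>r. degree (E r) \<le> Df r)"
    and m: "M \<le> M'" and w: "\<forall>r. 1 \<le> r \<longrightarrow> r \<le> M \<longrightarrow> Df r \<le> Df' r"
  { assume "r = 0 \<or> M' < r" then show "E r = 0" using h m by auto }
  show "degree (E r) \<le> Df' r"
  proof (cases "r = 0 \<or> M < r")
    case True then show ?thesis using h by (cases "r = 0") auto
  next
    case False then show ?thesis using h w by (meson le_trans less_one not_le)
  qed
qed

lemma GD_from_DB: "DB M Df E \<Longrightarrow> M \<le> M' \<Longrightarrow> (\<forall>r. 1 \<le> r \<longrightarrow> r \<le> M \<longrightarrow> Df r < Df' r) \<Longrightarrow> GD M' Df' sg' E"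
proof -
  assume h: "DB M Df E" "M \<le> M'" "\<forall>r. 1 \<le> r \<longrightarrow> r \<le> M \<longrightarrow> Df r < Df' r"
  have db: "DB M' Df' E" using DB_weaken[OF h(1) h(2)] h(3) by (simp add: less_imp_le)
  have "coeff (E r) (Df' r) = 0" for r
  proof (cases "r = 0 \<or> M < r")
    case True then show ?thesis using h(1) unfolding DB_def sup_in_def by (cases "r = 0") auto
  next
    case False
    then have "degree (E r) < Df' r" using h(1,3) unfolding DB_def by (meson le_less_trans less_one not_le)
    then show ?thesis by (simp add: coeff_eq_0)
  qed
  then show ?thesis using db unfolding GD_def by simp
qed

lemma GD_weaken: "GD M Df sg E \<Longrightarrow> M \<le> M' \<Longrightarrow>
   (\<forall>r. 1 \<le> r \<longrightarrow> r \<le> M \<longrightarrow> Df r \<le> Df' r \<and> (Df r < Df' r \<or> sg' r = sg r)) \<Longrightarrow> GD M' Df' sg' E"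
proof -
  assume h: "GD M Df sg E" "M \<le> M'" "\<forall>r. 1 \<le> r \<longrightarrow> r \<le> M \<longrightarrow> Df r \<le> Df' r \<and> (Df r < Df' r \<or> sg' r = sg r)"
  have db0: "DB M Df E" using h(1) unfolding GD_def by simp
  have db: "DB M' Df' E" using DB_weaken[OF db0 h(2)] h(3) by simp
  have "0 \<le> sg' r * coeff (E r) (Df' r)" for r
  proof (cases "r = 0 \<or> M < r")
    case True then show ?thesis using db0 unfolding DB_def sup_in_def by (cases "r = 0") auto
  next
    case False
    then have r: "1 \<le> r" "r \<le> M" by auto
    show ?thesis
    proof (cases "Df r < Df' r")
      case True
      then have "degree (E r) < Df' r" using db0 unfolding DB_def by (meson le_less_trans)
      then show ?thesis by (simp add: coeff_eq_0)
    next
      case False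
      then have "Df' r = Df r" "sg' r = sg r" using h(3) r by (auto simp: le_antisym)
      then show ?thesis using h(1) unfolding GD_def by simp
    qed
  qed
  then show ?thesis using db unfolding GD_def by simp
qed


definition tm :: "(nat \<Rightarrow> nat) \<Rightarrow> (nat \<Rightarrow> nat) \<Rightarrow> ep \<Rightarrow> ep \<Rightarrow> nat \<Rightarrow> nat \<Rightarrow> nat \<Rightarrow> rat" where
  "tm D1 D2 E1 E2 d r x = (if D1 x + D2 (r-x) = d then coeff (E1 x) (D1 x) * coeff (E2 (r-x)) (D2 (r-x))
       * of_nat x ^ (D1 x) * of_nat (r-x) ^ (D2 (r-x)) / of_nat r ^ d else 0)"

definition compat :: "nat \<Rightarrow> (nat \<Rightarrow> nat) \<Rightarrow> nat \<Rightarrow> (nat \<Rightarrow> nat) \<Rightarrow> (nat \<Rightarrow> nat) \<Rightarrow> bool" where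
  "compat M1 D1 M2 D2 D \<longleftrightarrow> (\<forall>x y. 1 \<le> x \<longrightarrow> x \<le> M1 \<longrightarrow> 1 \<le> y \<longrightarrow> y \<le> M2 \<longrightarrow> D1 x + D2 y \<le> D (x+y))"

lemma term_coeff:
  assumes d1: "DB M1 D1 E1" and d2: "DB M2 D2 E2" and c: "compat M1 D1 M2 D2 D" and xr: "x \<le> r"
  shows "degree (CR (of_nat x) (of_nat (r-x)) (E1 x) (E2 (r-x))) \<le> D r \<and>
         coeff (CR (of_nat x) (of_nat (r-x)) (E1 x) (E2 (r-x))) (D r) = tm D1 D2 E1 E2 (D r) r x"
proof (cases "E1 x = 0 \<or> E2 (r-x) = 0")
  case True
  then show ?thesis using CR_zero[OF True] unfolding tm_def by auto
next
  case False
  have "\<not> (x = 0 \<or> M1 < x)" using False d1 unfolding DB_def sup_in_def by blast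
  then have x: "1 \<le> x" "x \<le> M1" by auto
  have "\<not> (r - x = 0 \<or> M2 < r - x)" using False d2 unfolding DB_def sup_in_def by blast
  then have y: "1 \<le> r - x" "r - x \<le> M2" by auto
  have xr': "x + (r - x) = r" using xr by simp
  have "D1 x + D2 (r-x) \<le> D (x + (r-x))" using c x y unfolding compat_def by blast
  then have le: "D1 x + D2 (r-x) \<le> D r" using xr' by simp
  have nz: "(of_nat x + of_nat (r-x) :: rat) \<noteq> 0" using x by simp
  have sum: "(of_nat x + of_nat (r-x) :: rat) = of_nat r" using xr by (simp add: of_nat_diff)
  have b: "degree (CR (of_nat x) (of_nat (r-x)) (E1 x) (E2 (r-x))) \<le> D1 x + D2 (r-x) \<and>
      coeff (CR (of_nat x) (of_nat (r-x)) (E1 x) (E2 (r-x))) (D1 x + D2 (r-x)) =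
      coeff (E1 x) (D1 x) * coeff (E2 (r-x)) (D2 (r-x)) * of_nat x ^ (D1 x) * of_nat (r-x) ^ (D2 (r-x))
        / (of_nat x + of_nat (r-x)) ^ (D1 x + D2 (r-x))"
    by (rule CR_bound[OF nz]) (use d1 d2 in \<open>auto simp: DB_def\<close>)
  show ?thesis
  proof (cases "D1 x + D2 (r-x) = D r")
    case True
    then show ?thesis using b le unfolding tm_def sum by simp
  next
    case False
    then have "D1 x + D2 (r-x) < D r" using le by simp
    then show ?thesis using b unfolding tm_def by (auto simp: coeff_eq_0)
  qed
qed

lemma econv_coeff:
  assumes d1: "DB M1 D1 E1" and d2: "DB M2 D2 E2" and c: "compat M1 D1 M2 D2 D"
  shows "degree (econv E1 E2 r) \<le> D r \<and> coeff (econv E1 E2 r) (D r) = (\<Sum>x\<le>r. tm D1 D2 E1 E2 (D r) r x)"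
proof
  show "degree (econv E1 E2 r) \<le> D r"
    unfolding econv_def by (rule degree_sum_le) (use term_coeff[OF d1 d2 c] in auto)
  show "coeff (econv E1 E2 r) (D r) = (\<Sum>x\<le>r. tm D1 D2 E1 E2 (D r) r x)"
    unfolding econv_def coeff_sum by (rule sum.cong) (use term_coeff[OF d1 d2 c] in auto)
qed

lemma DB_econv:
  assumes d1: "DB M1 D1 E1" and d2: "DB M2 D2 E2" and c: "compat M1 D1 M2 D2 D"
  shows "DB (M1+M2) D (econv E1 E2)"
  unfolding DB_def using econv_coeff[OF d1 d2 c] sup_econv d1 d2 unfolding DB_def by blast

definition scompat :: "nat \<Rightarrow> (nat \<Rightarrow> nat) \<Rightarrow> (nat \<Rightarrow> rat) \<Rightarrow> nat \<Rightarrow> (nat \<Rightarrow> nat) \<Rightarrow> (nat \<Rightarrow> rat) \<Rightarrow> (nat \<Rightarrow> nat) \<Rightarrow> (nat \<Rightarrow> rat) \<Rightarrow> bool" where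
  "scompat M1 D1 sg1 M2 D2 sg2 D sg \<longleftrightarrow> (\<forall>x y. 1 \<le> x \<longrightarrow> x \<le> M1 \<longrightarrow> 1 \<le> y \<longrightarrow> y \<le> M2 \<longrightarrow>
      D1 x + D2 y < D (x+y) \<or> sg (x+y) = sg1 x * sg2 y)"

lemma term_sign:
  assumes g1: "GD M1 D1 sg1 E1" and g2: "GD M2 D2 sg2 E2" and c: "compat M1 D1 M2 D2 D"
    and sc: "scompat M1 D1 sg1 M2 D2 sg2 D sg" and xr: "x \<le> r"
  shows "0 \<le> sg r * tm D1 D2 E1 E2 (D r) r x"
proof (cases "E1 x = 0 \<or> E2 (r-x) = 0")
  case True
  then show ?thesis unfolding tm_def by auto
next
  case False
  have d1: "DB M1 D1 E1" and d2: "DB M2 D2 E2" using g1 g2 unfolding GD_def by auto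
  have "\<not> (x = 0 \<or> M1 < x)" using False d1 unfolding DB_def sup_in_def by blast
  then have x: "1 \<le> x" "x \<le> M1" by auto
  have "\<not> (r - x = 0 \<or> M2 < r - x)" using False d2 unfolding DB_def sup_in_def by blast
  then have y: "1 \<le> r - x" "r - x \<le> M2" by auto
  have xr': "x + (r - x) = r" using xr by simp
  show ?thesis
  proof (cases "D1 x + D2 (r-x) = D r")
    case True
    have "D1 x + D2 (r-x) < D (x + (r-x)) \<or> sg (x + (r-x)) = sg1 x * sg2 (r-x)"
      using sc x y unfolding scompat_def by blast
    then have s: "sg r = sg1 x * sg2 (r-x)" using True xr' by simp
    have p1: "0 \<le> sg1 x * coeff (E1 x) (D1 x)" using g1 unfolding GD_def by blast
    have p2: "0 \<le> sg2 (r-x) * coeff (E2 (r-x)) (D2 (r-x))" using g2 unfolding GD_def by blast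
    have "sg r * tm D1 D2 E1 E2 (D r) r x = (sg1 x * coeff (E1 x) (D1 x)) * (sg2 (r-x) * coeff (E2 (r-x)) (D2 (r-x)))
          * (of_nat x ^ (D1 x) * of_nat (r-x) ^ (D2 (r-x)) / of_nat r ^ D r)"
      unfolding tm_def s using True by simp
    moreover have C0: "0 \<le> (of_nat x ^ (D1 x) * of_nat (r-x) ^ (D2 (r-x)) / of_nat r ^ D r :: rat)" by simp
    moreover have "0 \<le> (sg1 x * coeff (E1 x) (D1 x)) * (sg2 (r-x) * coeff (E2 (r-x)) (D2 (r-x)))
          * (of_nat x ^ (D1 x) * of_nat (r-x) ^ (D2 (r-x)) / of_nat r ^ D r)"
      by (intro mult_nonneg_nonneg p1 p2 C0)
    ultimately show ?thesis by simp
  next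
    case False then show ?thesis unfolding tm_def by simp
  qed
qed

lemma GD_econv:
  assumes g1: "GD M1 D1 sg1 E1" and g2: "GD M2 D2 sg2 E2" and c: "compat M1 D1 M2 D2 D"
    and sc: "scompat M1 D1 sg1 M2 D2 sg2 D sg"
  shows "GD (M1+M2) D sg (econv E1 E2)"
proof -
  have d1: "DB M1 D1 E1" and d2: "DB M2 D2 E2" using g1 g2 unfolding GD_def by auto
  have "0 \<le> sg r * coeff (econv E1 E2 r) (D r)" for r
  proof -
    have "sg r * coeff (econv E1 E2 r) (D r) = (\<Sum>x\<le>r. sg r * tm D1 D2 E1 E2 (D r) r x)"
      using econv_coeff[OF d1 d2 c] by (simp add: sum_distrib_left)
    also have "0 \<le> \<dots>" by (rule sum_nonneg) (use term_sign[OF g1 g2 c sc] in auto)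
    finally show ?thesis by simp
  qed
  then show ?thesis unfolding GD_def using DB_econv[OF d1 d2 c] by blast
qed

lemma SP_econv:
  assumes g1: "GD M1 D1 sg1 E1" and g2: "GD M2 D2 sg2 E2" and c: "compat M1 D1 M2 D2 D"
    and sc: "scompat M1 D1 sg1 M2 D2 sg2 D sg"
    and s1: "SP x0 D1 sg1 E1" and s2: "SP y0 D2 sg2 E2"
    and eqD: "D1 x0 + D2 y0 = D (x0 + y0)" and eqs: "sg (x0+y0) = sg1 x0 * sg2 y0"
    and x0: "1 \<le> x0" and y0: "1 \<le> y0"
  shows "SP (x0+y0) D sg (econv E1 E2)"
proof -
  have d1: "DB M1 D1 E1" and d2: "DB M2 D2 E2" using g1 g2 unfolding GD_def by auto
  let ?r = "x0 + y0"
  have "sg ?r * tm D1 D2 E1 E2 (D ?r) ?r x0 = (sg1 x0 * coeff (E1 x0) (D1 x0)) * (sg2 y0 * coeff (E2 y0) (D2 y0))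
          * (of_nat x0 ^ (D1 x0) * of_nat y0 ^ (D2 y0) / of_nat ?r ^ D ?r)"
    unfolding tm_def eqs using eqD by simp
  moreover have C0: "0 < (of_nat x0 ^ (D1 x0) * of_nat y0 ^ (D2 y0) / of_nat ?r ^ D ?r :: rat)" using x0 y0 by simp
  moreover have "0 < (sg1 x0 * coeff (E1 x0) (D1 x0)) * (sg2 y0 * coeff (E2 y0) (D2 y0))
          * (of_nat x0 ^ (D1 x0) * of_nat y0 ^ (D2 y0) / of_nat ?r ^ D ?r)"
    using mult_pos_pos[OF mult_pos_pos[OF s1[unfolded SP_def] s2[unfolded SP_def]] C0] .
  ultimately have pos: "0 < sg ?r * tm D1 D2 E1 E2 (D ?r) ?r x0" by simp
  have "0 < (\<Sum>x\<le>?r. sg ?r * tm D1 D2 E1 E2 (D ?r) ?r x)"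
    by (rule sum_pos2[of _ x0]) (use pos term_sign[OF g1 g2 c sc] in auto)
  then show ?thesis unfolding SP_def using econv_coeff[OF d1 d2 c] by (simp add: sum_distrib_left)
qed

lemma econv_top:
  assumes d1: "DB M1 D1 E1" and d2: "DB M2 D2 E2" and c: "compat M1 D1 M2 D2 D"
    and eqD: "D1 M1 + D2 M2 = D (M1 + M2)"
  shows "coeff (econv E1 E2 (M1+M2)) (D (M1+M2)) = coeff (E1 M1) (D1 M1) * coeff (E2 M2) (D2 M2)
          * of_nat M1 ^ (D1 M1) * of_nat M2 ^ (D2 M2) / of_nat (M1+M2) ^ D (M1+M2)"
proof -
  let ?r = "M1 + M2"
  have "coeff (econv E1 E2 ?r) (D ?r) = (\<Sum>x\<le>?r. tm D1 D2 E1 E2 (D ?r) ?r x)"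
    using econv_coeff[OF d1 d2 c] by blast
  also have "\<dots> = (\<Sum>x\<in>{M1}. tm D1 D2 E1 E2 (D ?r) ?r x)"
  proof (rule sum.mono_neutral_right)
    show "\<forall>x\<in>{..?r} - {M1}. tm D1 D2 E1 E2 (D ?r) ?r x = 0"
    proof
      fix x assume "x \<in> {..?r} - {M1}"
      then have "M1 < x \<or> M2 < ?r - x" by auto
      then have "E1 x = 0 \<or> E2 (?r - x) = 0" using d1 d2 unfolding DB_def sup_in_def by auto
      then show "tm D1 D2 E1 E2 (D ?r) ?r x = 0" unfolding tm_def by auto
    qed
  qed auto
  also have "\<dots> = coeff (E1 M1) (D1 M1) * coeff (E2 M2) (D2 M2)
          * of_nat M1 ^ (D1 M1) * of_nat M2 ^ (D2 M2) / of_nat (M1+M2) ^ D (M1+M2)"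
    unfolding tm_def using eqD by simp
  finally show ?thesis .
qed

lemma GD_eAD:
  assumes g: "GD M Df sg E"
  shows "GD M (\<lambda>r. if r = 1 then Df r + 1 else Df r) sg (eAD M Df E)"
proof -
  have db: "DB M Df E" using g unfolding GD_def by simp
  have A: "degree (eAD M Df E r) \<le> (if r = 1 then Df r + 1 else Df r) \<and>
           0 \<le> sg r * coeff (eAD M Df E r) (if r = 1 then Df r + 1 else Df r)" for r
  proof (cases "r = 0 \<or> M < r")
    case True then show ?thesis unfolding eAD_def by auto
  next
    case False
    then have r: "1 \<le> r" "r \<le> M" by auto
    have dr: "degree (E r) \<le> Df r" using db unfolding DB_def by simp
    have sp: "ADs r (Df r) (E r) (eAD M Df E r)" by (rule eAD_spec[of r M E Df, OF r(1) r(2) dr])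
    have sg0: "0 \<le> sg r * coeff (E r) (Df r)" using g unfolding GD_def by simp
    show ?thesis
    proof (cases "r = 1")
      case True
      then have "degree (eAD M Df E r) \<le> Df r + 1" "coeff (eAD M Df E r) (Df r + 1) = coeff (E r) (Df r) / of_nat (Df r + 1)"
        using sp unfolding ADs_def by auto
      moreover have "0 \<le> sg r * coeff (E r) (Df r) / of_nat (Df r + 1)" using sg0 by simp
      ultimately show ?thesis using True by (simp add: times_divide_eq_right)
    next
      case False
      then have r2: "r \<ge> 2" using r by simp
      have dg: "degree (eAD M Df E r) \<le> Df r" and c: "coeff (eAD M Df E r) (Df r) = coeff (E r) (Df r) * of_nat r / (of_nat r - 1)"
        using sp False unfolding ADs_def by auto
      have pz: "0 \<le> (of_nat r / (of_nat r - 1) :: rat)" using r2 by (simp add: divide_pos_pos less_imp_le)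
      have eq: "sg r * coeff (eAD M Df E r) (Df r) = (sg r * coeff (E r) (Df r)) * (of_nat r / (of_nat r - 1))"
        unfolding c by simp
      have "0 \<le> sg r * coeff (eAD M Df E r) (Df r)" unfolding eq by (rule mult_nonneg_nonneg[OF sg0 pz])
      then show ?thesis using False dg by simp
    qed
  qed
  then show ?thesis unfolding GD_def DB_def using sup_eAD by blast
qed

lemma SP_eAD:
  assumes g: "GD M Df sg E" and s: "SP r Df sg E" and r: "1 \<le> r" "r \<le> M"
  shows "SP r (\<lambda>r. if r = 1 then Df r + 1 else Df r) sg (eAD M Df E)"
proof -
  have db: "DB M Df E" using g unfolding GD_def by simp
  have dr: "degree (E r) \<le> Df r" using db unfolding DB_def by simp
  have sp: "ADs r (Df r) (E r) (eAD M Df E r)" by (rule eAD_spec[of r M E Df, OF r(1) r(2) dr])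
  have sg0: "0 < sg r * coeff (E r) (Df r)" using s unfolding SP_def by simp
  show ?thesis
  proof (cases "r = 1")
    case True
    then have "coeff (eAD M Df E r) (Df r + 1) = coeff (E r) (Df r) / of_nat (Df r + 1)"
      using sp unfolding ADs_def by auto
    moreover have "0 < sg r * coeff (E r) (Df r) / of_nat (Df r + 1)" using sg0 by simp
    ultimately show ?thesis using True unfolding SP_def by (simp add: times_divide_eq_right)
  next
    case False
    then have r2: "r \<ge> 2" using r by simp
    have c: "coeff (eAD M Df E r) (Df r) = coeff (E r) (Df r) * of_nat r / (of_nat r - 1)"
      using sp False unfolding ADs_def by auto
    have pz: "0 < (of_nat r / (of_nat r - 1) :: rat)" using r2 by (simp add: divide_pos_pos)
    have eq: "sg r * coeff (eAD M Df E r) (Df r) = (sg r * coeff (E r) (Df r)) * (of_nat r / (of_nat r - 1))"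
      unfolding c by simp
    have "0 < sg r * coeff (eAD M Df E r) (Df r)" unfolding eq by (rule mult_pos_pos[OF sg0 pz])
    then show ?thesis using False unfolding SP_def by simp
  qed
qed

lemma eAD_top:
  assumes db: "DB M Df E" and r: "2 \<le> r" "r \<le> M"
  shows "coeff (eAD M Df E r) (Df r) = coeff (E r) (Df r) * of_nat r / (of_nat r - 1)"
proof -
  have dr: "degree (E r) \<le> Df r" using db unfolding DB_def by simp
  have "ADs r (Df r) (E r) (eAD M Df E r)" by (rule eAD_spec) (use r dr in auto)
  then show ?thesis using r unfolding ADs_def by auto
qed


declare poincare_M0.simps[simp del]

lemma P_unfold: "poincare_M0 n =
     (if n < 3 then 0
      else if n = 3 then 1
      else poincare_M0 (n - 1) * [:1, 1:]
           + monom 1 1 * (\<Sum>i\<in>{3..n-2}. smult ((n - 2) choose (i - 1))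
                 (poincare_M0 i * poincare_M0 (n + 1 - i))))"
  by (rule poincare_M0.simps)

lemma P3: "poincare_M0 3 = 1"
  by (subst P_unfold) simp

lemma coeff_x1: "coeff ((p::nat poly) * [:1, 1:]) k = coeff p k + (if k = 0 then 0 else coeff p (k - 1))"
  by (cases k) (simp_all add: coeff_pCons)

lemma coeff_x1': "coeff ((p::nat poly) * [:Suc 0, Suc 0:]) k = coeff p k + (if k = 0 then 0 else coeff p (k - 1))"
  using coeff_x1 by simp

lemma rk_rec:
  assumes n: "n \<ge> 4" and k: "k \<ge> 1"
  shows "rk_H n k = rk_H (n-1) k + rk_H (n-1) (k-1) +
     (\<Sum>i\<in>{3..n-2}. ((n - 2) choose (i - 1)) * (\<Sum>j\<le>k-1. rk_H i j * rk_H (n+1-i) (k-1-j)))"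
proof -
  have "poincare_M0 n = poincare_M0 (n - 1) * [:1, 1:]
           + monom 1 1 * (\<Sum>i\<in>{3..n-2}. smult ((n - 2) choose (i - 1))
                 (poincare_M0 i * poincare_M0 (n + 1 - i)))"
    using n by (subst P_unfold) simp
  then have "coeff (poincare_M0 n) k = coeff (poincare_M0 (n - 1)) k + coeff (poincare_M0 (n - 1)) (k - 1)
     + (\<Sum>i\<in>{3..n-2}. ((n - 2) choose (i - 1)) * coeff (poincare_M0 i * poincare_M0 (n + 1 - i)) (k-1))"
    using k by (simp add: coeff_x1 coeff_x1' coeff_monom_mult coeff_sum del: mult_pCons_right)
  then show ?thesis unfolding rk_H_def by (simp add: coeff_mult)
qed

lemma rk_3: "k \<ge> 1 \<Longrightarrow> rk_H 3 k = 0"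
  unfolding rk_H_def by (simp add: P3)

lemma rk_0: "n \<ge> 3 \<Longrightarrow> rk_H n 0 = 1"
proof (induction n rule: nat_less_induct)
  case (1 n)
  show ?case
  proof (cases "n = 3")
    case True then show ?thesis unfolding rk_H_def by (simp add: P3)
  next
    case False
    then have n: "n \<ge> 4" using 1 by simp
    have "poincare_M0 n = poincare_M0 (n - 1) * [:1, 1:]
           + monom 1 1 * (\<Sum>i\<in>{3..n-2}. smult ((n - 2) choose (i - 1))
                 (poincare_M0 i * poincare_M0 (n + 1 - i)))"
      using n by (subst P_unfold) simp
    then have "coeff (poincare_M0 n) 0 = coeff (poincare_M0 (n-1)) 0"
      by (simp add: coeff_x1 coeff_x1' coeff_monom_mult del: mult_pCons_right)
    then show ?thesis using 1 n unfolding rk_H_def by simp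
  qed
qed


definition esum :: "(nat \<Rightarrow> ep) \<Rightarrow> nat set \<Rightarrow> ep" where
  "esum f A = (\<lambda>r. \<Sum>j\<in>A. f j r)"

lemma ev_esum: "ev M (esum f A) n = (\<Sum>j\<in>A. ev M (f j) n)"
  unfolding ev_def esum_def by (simp add: poly_sum sum_distrib_right) (rule sum.swap)

lemma esum_insert: "finite A \<Longrightarrow> a \<notin> A \<Longrightarrow> esum f (insert a A) = eadd (f a) (esum f A)"
  unfolding esum_def eadd_def by simp

lemma GD_zero: "GD M Df sg (\<lambda>r. 0)"
  unfolding GD_def DB_def sup_in_def by simp

lemma GD_esum: "finite A \<Longrightarrow> (\<forall>j\<in>A. GD M Df sg (f j)) \<Longrightarrow> GD M Df sg (esum f A)"
proof (induction A rule: finite_induct)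
  case empty then show ?case unfolding esum_def using GD_zero by simp
next
  case (insert a A)
  then show ?case by (subst esum_insert) (auto intro: GD_eadd)
qed

lemma SP_esum:
  assumes A: "finite A" "j0 \<in> A" and s: "SP r0 Df sg (f j0)" and g: "\<forall>j\<in>A. GD M Df sg (f j)"
  shows "SP r0 Df sg (esum f A)"
proof -
  have "0 < (\<Sum>j\<in>A. sg r0 * coeff (f j r0) (Df r0))"
    by (rule sum_pos2[OF A]) (use s g in \<open>auto simp: SP_def GD_def\<close>)
  then show ?thesis unfolding SP_def esum_def by (simp add: coeff_sum sum_distrib_left)
qed

lemma SP_transfer: "SP r0 Df sg E \<Longrightarrow> Df r0 = Df' r0 \<Longrightarrow> sg r0 = sg' r0 \<Longrightarrow> SP r0 Df' sg' E"
  unfolding SP_def by simp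

definition Dk :: "nat \<Rightarrow> nat \<Rightarrow> nat" where "Dk k r = 2 * (k + 1 - r)"
definition sk :: "nat \<Rightarrow> nat \<Rightarrow> rat" where "sk k r = (-1) ^ (k + 1 - r)"
definition Er :: "nat \<Rightarrow> nat \<Rightarrow> nat" where "Er k r = (if r = 1 then 2 * k - 1 else 2 * (k + 1 - r))"

definition Inv :: "nat \<Rightarrow> ep \<Rightarrow> bool" where
  "Inv k E \<longleftrightarrow> GD (k+1) (Dk k) (sk k) E \<and> (\<forall>r. 1 \<le> r \<longrightarrow> r \<le> k+1 \<longrightarrow> SP r (Dk k) (sk k) E)
      \<and> coeff (E (k+1)) 0 = cc k \<and> (\<forall>n\<ge>3. of_nat (rk_H n k) = ev (k+1) E n)"

lemma Inv0_ev: "Inv 0 E \<Longrightarrow> ev 1 E n = 1"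
proof -
  assume h: "Inv 0 E"
  then have "degree (E 1) \<le> Dk 0 1" unfolding Inv_def GD_def DB_def by blast
  then have "degree (E 1) = 0" by (simp add: Dk_def)
  then have "E 1 = [:coeff (E 1) 0:]" using degree_0_id by metis
  moreover have "coeff (E 1) 0 = 1" using h unfolding Inv_def cc_def by simp
  ultimately have "E 1 = 1" by (simp add: one_pCons)
  moreover have "E 0 = 0" using h unfolding Inv_def GD_def DB_def sup_in_def by simp
  ultimately show ?thesis unfolding ev_def by simp
qed

lemma Inv_DB: "Inv k E \<Longrightarrow> DB (k+1) (Dk k) E"
  unfolding Inv_def GD_def by simp
lemma Inv_GD: "Inv k E \<Longrightarrow> GD (k+1) (Dk k) (sk k) E"
  unfolding Inv_def by simp


lemma ar1: "j < k \<Longrightarrow> 1 \<le> x \<Longrightarrow> x \<le> j+1 \<Longrightarrow> 1 \<le> y \<Longrightarrow> y \<le> k - j \<Longrightarrow>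
    Dk j x + Dk (k-1-j) y = Er k (x+y)"
  unfolding Dk_def Er_def by auto

lemma ar2: "j < k \<Longrightarrow> 1 \<le> x \<Longrightarrow> x \<le> j+1 \<Longrightarrow> 1 \<le> y \<Longrightarrow> y \<le> k - j \<Longrightarrow>
    sk k (x+y) = sk j x * sk (k-1-j) y"
proof -
  assume a: "j < k" "1 \<le> x" "x \<le> j+1" "1 \<le> y" "y \<le> k - j"
  then have "k + 1 - (x+y) = (j + 1 - x) + (k - 1 - j + 1 - y)" by auto
  then show ?thesis unfolding sk_def by (simp add: power_add)
qed

lemma ar3: "j < k \<Longrightarrow> 1 \<le> y \<Longrightarrow> y \<le> k - j \<Longrightarrow> Dk (k-1-j) y < Er k y"
  unfolding Dk_def Er_def by auto
lemma ar4: "j < k \<Longrightarrow> 1 \<le> x \<Longrightarrow> x \<le> j+1 \<Longrightarrow> Dk j x < Er k x"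
  unfolding Dk_def Er_def by auto
lemma ar5: "1 \<le> j \<Longrightarrow> j < k \<Longrightarrow> 1 \<le> y \<Longrightarrow> y \<le> k - j \<Longrightarrow> Dk (k-1-j) y + 1 < Er k y"
  unfolding Dk_def Er_def by auto
lemma ar6: "k \<ge> 1 \<Longrightarrow> 1 \<le> r \<Longrightarrow> r \<le> k \<Longrightarrow> Dk (k-1) r < Er k r"
  unfolding Dk_def Er_def by auto
lemma ar7: "k \<ge> 1 \<Longrightarrow> 1 \<le> r \<Longrightarrow> r \<le> k \<Longrightarrow>
    Dk (k-1) r + 1 \<le> Er k r \<and> (Dk (k-1) r + 1 < Er k r \<or> sk k r = - sk (k-1) r)"
proof -
  assume a: "k \<ge> 1" "1 \<le> r" "r \<le> k"
  show ?thesis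
  proof (cases "r = 1")
    case True
    obtain m where m: "k = Suc m" using a by (cases k) auto
    have "sk k 1 = - sk (k-1) 1" unfolding sk_def m by simp
    then show ?thesis using True a unfolding Dk_def Er_def by auto
  next
    case False then show ?thesis using a unfolding Dk_def Er_def by auto
  qed
qed

definition Fp :: "nat \<Rightarrow> (nat \<Rightarrow> ep) \<Rightarrow> nat \<Rightarrow> ep" where
  "Fp k EE j = eshm (eshm (econv (eshp 1 (EE j)) (eshp 2 (EE (k-1-j)))))"
definition B1p :: "nat \<Rightarrow> (nat \<Rightarrow> ep) \<Rightarrow> nat \<Rightarrow> ep" where
  "B1p k EE j = esm (- ev (j+1) (EE j) 1) (EE (k-1-j))"
definition B2p :: "nat \<Rightarrow> (nat \<Rightarrow> ep) \<Rightarrow> nat \<Rightarrow> ep" where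
  "B2p k EE j = esm (-1) (emul (esm (ev (j+1) (EE j) 2) (eshm (EE (k-1-j)))))"
definition B3p :: "nat \<Rightarrow> (nat \<Rightarrow> ep) \<Rightarrow> nat \<Rightarrow> ep" where
  "B3p k EE j = esm (- ev (k-j) (EE (k-1-j)) 2) (eshm (EE j))"
definition Tp :: "nat \<Rightarrow> (nat \<Rightarrow> ep) \<Rightarrow> nat \<Rightarrow> ep" where
  "Tp k EE j = eadd (Fp k EE j) (eadd (B1p k EE j) (eadd (B2p k EE j) (B3p k EE j)))"
definition Rk :: "nat \<Rightarrow> (nat \<Rightarrow> ep) \<Rightarrow> ep" where
  "Rk k EE = eadd (eshm (EE (k-1))) (esum (Tp k EE) {..<k})"

context
  fixes k :: nat and EE :: "nat \<Rightarrow> ep"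
  assumes k1: "k \<ge> 1" and IH: "\<forall>j<k. Inv j (EE j)"
begin

lemma kj: "j < k \<Longrightarrow> k - 1 - j < k \<and> k - 1 - j + 1 = k - j"
  by auto

lemma compatF: "j < k \<Longrightarrow> compat (j+1) (Dk j) (k-j) (Dk (k-1-j)) (Er k)"
  unfolding compat_def
proof (intro allI impI)
  fix x y assume "j < k" "1 \<le> x" "x \<le> j + 1" "1 \<le> y" "y \<le> k - j"
  then have "Dk j x + Dk (k-1-j) y = Er k (x+y)" by (rule ar1)
  then show "Dk j x + Dk (k - 1 - j) y \<le> Er k (x + y)" by simp
qed

lemma scompatF: "j < k \<Longrightarrow> scompat (j+1) (Dk j) (sk j) (k-j) (Dk (k-1-j)) (sk (k-1-j)) (Er k) (sk k)"
  unfolding scompat_def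
proof (intro allI impI)
  fix x y assume "j < k" "1 \<le> x" "x \<le> j + 1" "1 \<le> y" "y \<le> k - j"
  then have "sk k (x+y) = sk j x * sk (k-1-j) y" by (rule ar2)
  then show "Dk j x + Dk (k - 1 - j) y < Er k (x + y) \<or> sk k (x + y) = sk j x * sk (k - 1 - j) y" by simp
qed

lemma GD1: "j < k \<Longrightarrow> GD (j+1) (Dk j) (sk j) (EE j)"
  using IH Inv_GD by blast
lemma GD2: "j < k \<Longrightarrow> GD (k-j) (Dk (k-1-j)) (sk (k-1-j)) (EE (k-1-j))"
proof -
  assume j: "j < k"
  then have "Inv (k-1-j) (EE (k-1-j))" using IH kj by blast
  then have "GD (k-1-j+1) (Dk (k-1-j)) (sk (k-1-j)) (EE (k-1-j))" by (rule Inv_GD)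
  then show ?thesis using kj[OF j] by simp
qed

lemma GD_Fp: "j < k \<Longrightarrow> GD (k+1) (Er k) (sk k) (Fp k EE j)"
proof -
  assume j: "j < k"
  have g1: "GD (j+1) (Dk j) (sk j) (eshp 1 (EE j))" by (rule GD_eshp[OF GD1[OF j]])
  have g2: "GD (k-j) (Dk (k-1-j)) (sk (k-1-j)) (eshp 2 (EE (k-1-j)))" by (rule GD_eshp[OF GD2[OF j]])
  have "GD (j+1 + (k-j)) (Er k) (sk k) (econv (eshp 1 (EE j)) (eshp 2 (EE (k-1-j))))"
    by (rule GD_econv[OF g1 g2 compatF[OF j] scompatF[OF j]])
  moreover have "j + 1 + (k - j) = k + 1" using j by simp
  ultimately have "GD (k+1) (Er k) (sk k) (econv (eshp 1 (EE j)) (eshp 2 (EE (k-1-j))))" by simp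
  then show ?thesis unfolding Fp_def by (intro GD_eshm)
qed

lemma GD_B1: "j < k \<Longrightarrow> GD (k+1) (Er k) (sk k) (B1p k EE j)"
proof -
  assume j: "j < k"
  have "DB (k-j) (Dk (k-1-j)) (B1p k EE j)" unfolding B1p_def using GD2[OF j] DB_esm unfolding GD_def by blast
  then show ?thesis by (rule GD_from_DB) (use j ar3 in auto)
qed

lemma GD_B3: "j < k \<Longrightarrow> GD (k+1) (Er k) (sk k) (B3p k EE j)"
proof -
  assume j: "j < k"
  have "DB (j+1) (Dk j) (B3p k EE j)" unfolding B3p_def using GD1[OF j] DB_esm DB_eshm unfolding GD_def by blast
  then show ?thesis by (rule GD_from_DB) (use j ar4 in auto)
qed

lemma EE0_2: "ev 1 (EE 0) 2 = 1"
proof -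
  have "Inv 0 (EE 0)" using IH k1 by simp
  then show ?thesis by (rule Inv0_ev)
qed

lemma GD_B2: "j < k \<Longrightarrow> GD (k+1) (Er k) (sk k) (B2p k EE j)"
proof -
  assume j: "j < k"
  show ?thesis
  proof (cases "j = 0")
    case False
    have g: "DB (k-j) (Dk (k-1-j)) (EE (k-1-j))" using GD2[OF j] unfolding GD_def by simp
    have "DB (k-j) (\<lambda>r. Dk (k-1-j) r + 1) (B2p k EE j)" unfolding B2p_def
      by (rule DB_esm, rule DB_emul, rule DB_esm, rule DB_eshm, rule g)
    moreover have "k - j \<le> k + 1" by simp
    moreover have "\<forall>r. 1 \<le> r \<longrightarrow> r \<le> k - j \<longrightarrow> Dk (k-1-j) r + 1 < Er k r"
    proof (intro allI impI)
      fix r assume "1 \<le> r" "r \<le> k - j"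
      then show "Dk (k-1-j) r + 1 < Er k r" using ar5[of j k r] j False by simp
    qed
    ultimately show ?thesis by (rule GD_from_DB)
  next
    case True
    have g: "GD k (Dk (k-1)) (sk (k-1)) (EE (k-1))" using GD2[OF j] True by simp
    have a: "GD k (Dk (k-1)) (sk (k-1)) (eshm (EE (k-1)))" by (rule GD_eshm[OF g])
    have b: "GD k (Dk (k-1)) (sk (k-1)) (esm 1 (eshm (EE (k-1))))" by (rule GD_esm_pos[OF a]) simp
    have c: "GD k (\<lambda>r. Dk (k-1) r + 1) (sk (k-1)) (emul (esm 1 (eshm (EE (k-1)))))" by (rule GD_emul[OF b])
    have d: "GD k (\<lambda>r. Dk (k-1) r + 1) (\<lambda>r. - sk (k-1) r) (esm (-1) (emul (esm 1 (eshm (EE (k-1))))))"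
      by (rule GD_esm_neg[OF c]) simp
    have e: "GD k (\<lambda>r. Dk (k-1) r + 1) (\<lambda>r. - sk (k-1) r) (B2p k EE j)"
      unfolding B2p_def True using d EE0_2 by simp
    have "k \<le> k + 1" by simp
    moreover have "\<forall>r. 1 \<le> r \<longrightarrow> r \<le> k \<longrightarrow> Dk (k-1) r + 1 \<le> Er k r \<and> (Dk (k-1) r + 1 < Er k r \<or> sk k r = - sk (k-1) r)"
      using ar7 k1 by blast
    ultimately show ?thesis by (rule GD_weaken[OF e])
  qed
qed

lemma GD_Tp: "j < k \<Longrightarrow> GD (k+1) (Er k) (sk k) (Tp k EE j)"
  unfolding Tp_def by (intro GD_eadd GD_Fp GD_B1 GD_B2 GD_B3)

lemma GD_R: "GD (k+1) (Er k) (sk k) (Rk k EE)"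
proof -
  have "k - 1 < k" using k1 by simp
  then have "Inv (k-1) (EE (k-1))" using IH by blast
  then have "GD (k-1+1) (Dk (k-1)) (sk (k-1)) (EE (k-1))" by (rule Inv_GD)
  then have "GD k (Dk (k-1)) (sk (k-1)) (EE (k-1))" using k1 by simp
  then have "DB k (Dk (k-1)) (eshm (EE (k-1)))" using DB_eshm unfolding GD_def by blast
  then have "GD (k+1) (Er k) (sk k) (eshm (EE (k-1)))" by (rule GD_from_DB) (use k1 ar6 in auto)
  moreover have "GD (k+1) (Er k) (sk k) (esum (Tp k EE) {..<k})" by (rule GD_esum) (use GD_Tp in blast)+
  ultimately show ?thesis unfolding Rk_def by (rule GD_eadd)
qed

end


context
  fixes k :: nat and EE :: "nat \<Rightarrow> ep"
  assumes k1: "k \<ge> 1" and IH: "\<forall>j<k. Inv j (EE j)"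
begin

lemma InvL: "Inv (k-1) (EE (k-1))"
proof -
  have "k - 1 < k" using k1 by simp
  then show ?thesis using IH by blast
qed

lemma InvJ: "j < k \<Longrightarrow> Inv j (EE j)" using IH by blast
lemma InvL2: "j < k \<Longrightarrow> Inv (k-1-j) (EE (k-1-j))"
proof -
  assume "j < k" then have "k - 1 - j < k" by simp
  then show ?thesis using IH by blast
qed

lemma DBL: "DB k (Dk (k-1)) (EE (k-1))"
  using Inv_DB[OF InvL] k1 by simp

lemma SP_F0:
  assumes r: "2 \<le> r" "r \<le> k+1"
  shows "SP r (Er k) (sk k) (Fp k EE 0)"
proof -
  have i0: "Inv 0 (EE 0)" using InvJ k1 by simp
  have g1: "GD (0+1) (Dk 0) (sk 0) (eshp 1 (EE 0))" by (rule GD_eshp[OF Inv_GD[OF i0]])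
  have s1: "SP 1 (Dk 0) (sk 0) (eshp 1 (EE 0))"
    by (rule SP_eshp[OF _ Inv_DB[OF i0]]) (use i0 in \<open>auto simp: Inv_def\<close>)
  have g2': "GD k (Dk (k-1)) (sk (k-1)) (EE (k-1))" using Inv_GD[OF InvL] k1 by simp
  have g2: "GD (k-0) (Dk (k-1-0)) (sk (k-1-0)) (eshp 2 (EE (k-1-0)))" using GD_eshp[OF g2'] by simp
  have s2': "SP (r-1) (Dk (k-1)) (sk (k-1)) (EE (k-1))" using InvL r k1 unfolding Inv_def by auto
  have s2: "SP (r-1) (Dk (k-1-0)) (sk (k-1-0)) (eshp 2 (EE (k-1-0)))"
    using SP_eshp[OF s2' DBL] r by simp
  have eqD: "Dk 0 1 + Dk (k-1-0) (r-1) = Er k (1 + (r-1))" by (rule ar1) (use r k1 in auto)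
  have eqs: "sk k (1 + (r-1)) = sk 0 1 * sk (k-1-0) (r-1)" by (rule ar2) (use r k1 in auto)
  have k0: "(0::nat) < k" using k1 by simp
  have sp: "SP (1 + (r-1)) (Er k) (sk k) (econv (eshp 1 (EE 0)) (eshp 2 (EE (k-1-0))))"
    by (rule SP_econv[OF g1 g2 compatF[OF k1 IH k0] scompatF[OF k1 IH k0] s1 s2 eqD eqs]) (use r in auto)
  have gc: "GD (0+1 + (k-0)) (Er k) (sk k) (econv (eshp 1 (EE 0)) (eshp 2 (EE (k-1-0))))"
    by (rule GD_econv[OF g1 g2 compatF[OF k1 IH k0] scompatF[OF k1 IH k0]])
  have db: "DB (k+1) (Er k) (econv (eshp 1 (EE 0)) (eshp 2 (EE (k-1))))" using gc unfolding GD_def by simp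
  have sp': "SP r (Er k) (sk k) (econv (eshp 1 (EE 0)) (eshp 2 (EE (k-1))))" using sp r by simp
  have "SP r (Er k) (sk k) (eshm (econv (eshp 1 (EE 0)) (eshp 2 (EE (k-1)))))"
    by (rule SP_eshm[OF sp' db]) (use r in simp)
  then have "SP r (Er k) (sk k) (eshm (eshm (econv (eshp 1 (EE 0)) (eshp 2 (EE (k-1))))))"
    by (rule SP_eshm[OF _ DB_eshm[OF db]]) (use r in simp)
  then show ?thesis unfolding Fp_def by simp
qed

lemma SP_B20: "SP 1 (Er k) (sk k) (B2p k EE 0)"
proof -
  have s: "SP 1 (Dk (k-1)) (sk (k-1)) (EE (k-1))" using InvL k1 unfolding Inv_def by auto
  have a: "SP 1 (Dk (k-1)) (sk (k-1)) (eshm (EE (k-1)))" by (rule SP_eshm[OF s DBL]) simp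
  have b: "SP 1 (Dk (k-1)) (sk (k-1)) (esm 1 (eshm (EE (k-1))))" by (rule SP_esm_pos[OF a]) simp
  have c: "SP 1 (\<lambda>r. Dk (k-1) r + 1) (sk (k-1)) (emul (esm 1 (eshm (EE (k-1)))))"
    by (rule SP_emul[OF b DB_esm[OF DB_eshm[OF DBL]]])
  have d: "SP 1 (\<lambda>r. Dk (k-1) r + 1) (\<lambda>r. - sk (k-1) r) (esm (-1) (emul (esm 1 (eshm (EE (k-1))))))"
    by (rule SP_esm_neg[OF c]) simp
  have "Dk (k-1) 1 + 1 \<le> Er k 1 \<and> (Dk (k-1) 1 + 1 < Er k 1 \<or> sk k 1 = - sk (k-1) 1)"
    using ar7[OF k1, of 1] k1 by simp
  moreover have "Dk (k-1) 1 + 1 = Er k 1" using k1 unfolding Dk_def Er_def by simp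
  ultimately have e: "sk k 1 = - sk (k-1) 1" by simp
  have "SP 1 (Er k) (sk k) (esm (-1) (emul (esm 1 (eshm (EE (k-1))))))"
    by (rule SP_transfer[OF d]) (use e k1 in \<open>auto simp: Dk_def Er_def\<close>)
  then show ?thesis unfolding B2p_def using EE0_2[OF k1 IH] by simp
qed

lemma SP_T0: "1 \<le> r \<Longrightarrow> r \<le> k+1 \<Longrightarrow> SP r (Er k) (sk k) (Tp k EE 0)"
proof -
  assume r: "1 \<le> r" "r \<le> k+1"
  have k0: "(0::nat) < k" using k1 by simp
  show ?thesis
  proof (cases "r = 1")
    case True
    have "SP r (Er k) (sk k) (eadd (B1p k EE 0) (eadd (B2p k EE 0) (B3p k EE 0)))"
      unfolding True
      by (rule SP_eadd2[OF GD_B1[OF k1 IH k0]], rule SP_eadd1[OF SP_B20 GD_B3[OF k1 IH k0]])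
    then show ?thesis unfolding Tp_def by (rule SP_eadd2[OF GD_Fp[OF k1 IH k0]])
  next
    case False
    then have "SP r (Er k) (sk k) (Fp k EE 0)" using SP_F0 r by simp
    then show ?thesis unfolding Tp_def
      by (rule SP_eadd1[where M="k+1"]) (intro GD_eadd GD_B1[OF k1 IH k0] GD_B2[OF k1 IH k0] GD_B3[OF k1 IH k0])
  qed
qed

lemma SP_R: "1 \<le> r \<Longrightarrow> r \<le> k+1 \<Longrightarrow> SP r (Er k) (sk k) (Rk k EE)"
proof -
  assume r: "1 \<le> r" "r \<le> k+1"
  have "k - 1 < k" using k1 by simp
  have gp: "GD (k+1) (Er k) (sk k) (eshm (EE (k-1)))"
    by (rule GD_from_DB[OF DB_eshm[OF DBL]]) (use k1 ar6 in auto)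
  have "SP r (Er k) (sk k) (esum (Tp k EE) {..<k})"
    by (rule SP_esum[of _ 0]) (use k1 SP_T0[OF r] GD_Tp[OF k1 IH] in auto)
  then show ?thesis unfolding Rk_def by (rule SP_eadd2[OF gp])
qed

end


lemma sup_zero: "sup_in M E \<Longrightarrow> M < r \<Longrightarrow> E r = 0"
  unfolding sup_in_def by simp

context
  fixes k :: nat and EE :: "nat \<Rightarrow> ep"
  assumes k1: "k \<ge> 1" and IH: "\<forall>j<k. Inv j (EE j)"
begin

lemma supJ: "j < k \<Longrightarrow> sup_in (j+1) (EE j)"
  using Inv_DB[OF InvJ[OF k1 IH]] unfolding DB_def by blast
lemma supL: "j < k \<Longrightarrow> sup_in (k-j) (EE (k-1-j))"
proof -
  assume j: "j < k"
  have "sup_in (k-1-j+1) (EE (k-1-j))" using Inv_DB[OF InvL2[OF k1 IH j]] unfolding DB_def by blast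
  moreover have "k - 1 - j + 1 = k - j" using j by simp
  ultimately show ?thesis by simp
qed

lemma Fp_top: "j < k \<Longrightarrow> coeff (Fp k EE j (k+1)) 0 =
    cc j * cc (k-1-j) * of_nat (j+1) * of_nat (k-j)^2 / of_nat (k+1)^2"
proof -
  assume j: "j < k"
  let ?l = "k-1-j"
  let ?G1 = "eshp 1 (EE j)" and ?G2 = "eshp 2 (EE ?l)"
  let ?C = "econv ?G1 ?G2"
  have i1: "Inv j (EE j)" by (rule InvJ[OF k1 IH j])
  have i2: "Inv ?l (EE ?l)" by (rule InvL2[OF k1 IH j])
  have d1: "DB (j+1) (Dk j) ?G1" using DB_eshp[OF Inv_DB[OF i1]] .
  have d2': "DB (?l+1) (Dk ?l) ?G2" using DB_eshp[OF Inv_DB[OF i2]] .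
  have kk0: "k - 1 - j + 1 = k - j" using j by simp
  have d2: "DB (k-j) (Dk ?l) ?G2" using d2' unfolding kk0 .
  have gc: "GD (j+1 + (k-j)) (Er k) (sk k) ?C"
    by (rule GD_econv[OF GD_eshp[OF Inv_GD[OF i1]] _ compatF[OF k1 IH j] scompatF[OF k1 IH j]])
       (use GD_eshp[OF Inv_GD[OF i2], unfolded kk0] in simp)
  have dbC: "DB (k+1) (Er k) ?C" using gc j unfolding GD_def by simp
  have er0: "Er k (k+1) = 0" using k1 unfolding Er_def by simp
  have degC: "degree (?C (k+1)) \<le> 0" using dbC er0 unfolding DB_def by metis
  have eqD: "Dk j (j+1) + Dk ?l (k-j) = Er k (j+1 + (k-j))" using j er0 unfolding Dk_def by simp
  have top: "coeff (?C (j+1 + (k-j))) (Er k (j+1 + (k-j))) = coeff (?G1 (j+1)) (Dk j (j+1)) * coeff (?G2 (k-j)) (Dk ?l (k-j))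
          * of_nat (j+1) ^ (Dk j (j+1)) * of_nat (k-j) ^ (Dk ?l (k-j)) / of_nat (j+1 + (k-j)) ^ Er k (j+1 + (k-j))"
    by (rule econv_top[OF d1 d2 compatF[OF k1 IH j] eqD])
  have z1: "Dk j (j+1) = 0" "Dk ?l (k-j) = 0" using j unfolding Dk_def by auto
  have e1: "coeff (?G1 (j+1)) 0 = of_nat (j+1) * cc j"
  proof -
    have "degree (EE j (j+1)) \<le> 0" using Inv_DB[OF i1] z1 unfolding DB_def by metis
    then have "coeff (?G1 (j+1)) 0 = of_nat (j+1) ^ 1 * coeff (EE j (j+1)) 0" by (rule eshp_coeff)
    then show ?thesis using i1 unfolding Inv_def by simp
  qed
  have e2: "coeff (?G2 (k-j)) 0 = of_nat (k-j)^2 * cc ?l"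
  proof -
    have kk: "k - j = ?l + 1" using j by simp
    have "degree (EE ?l (?l+1)) \<le> 0" using Inv_DB[OF i2] unfolding DB_def Dk_def by (metis diff_self_eq_0 mult_0_right)
    then have "coeff (?G2 (?l+1)) 0 = of_nat (?l+1) ^ 2 * coeff (EE ?l (?l+1)) 0" by (rule eshp_coeff)
    then show ?thesis using i2 kk unfolding Inv_def by simp
  qed
  have jk: "j + 1 + (k - j) = k + 1" using j by simp
  have cC: "coeff (?C (k+1)) 0 = of_nat (j+1) * cc j * (of_nat (k-j)^2 * cc ?l)"
    using top unfolding jk er0 z1 e1 e2 by simp
  have "coeff (Fp k EE j (k+1)) 0 = 1 / of_nat (k+1) * (1 / of_nat (k+1) * coeff (?C (k+1)) 0)"
  proof -
    have a: "coeff (eshm ?C (k+1)) 0 = 1 / of_nat (k+1) * coeff (?C (k+1)) 0" by (rule eshm_coeff[of ?C "k+1", OF degC])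
    have "degree (eshm ?C (k+1)) \<le> 0" using eshm_deg[of ?C "k+1"] degC by simp
    then have "coeff (eshm (eshm ?C) (k+1)) 0 = 1 / of_nat (k+1) * coeff (eshm ?C (k+1)) 0" by (rule eshm_coeff[of "eshm ?C" "k+1"])
    then show ?thesis unfolding Fp_def a .
  qed
  also have "\<dots> = cc j * cc (k-1-j) * of_nat (j+1) * of_nat (k-j)^2 / of_nat (k+1)^2"
    unfolding cC by (simp add: power2_eq_square field_simps)
  finally show ?thesis .
qed

lemma R_top: "coeff (Rk k EE (k+1)) 0 =
    (\<Sum>j<k. cc j * cc (k-1-j) * of_nat (j+1) * of_nat (k-j)^2) / of_nat (k+1)^2"
proof -
  have L: "eshm (EE (k-1)) (k+1) = 0"
  proof -
    have "sup_in k (EE (k-1))" using DBL[OF k1 IH] unfolding DB_def by blast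
    then have "EE (k-1) (k+1) = 0" by (rule sup_zero) simp
    then show ?thesis unfolding eshm_def by simp
  qed
  have T: "coeff (Tp k EE j (k+1)) 0 = coeff (Fp k EE j (k+1)) 0" if j: "j < k" for j
  proof -
    have s1: "sup_in (k-j) (EE (k-1-j))" by (rule supL[OF j])
    have s2: "sup_in (j+1) (EE j)" by (rule supJ[OF j])
    have z1: "EE (k-1-j) (k+1) = 0" by (rule sup_zero[OF s1]) simp
    have z2: "EE j (k+1) = 0" by (rule sup_zero[OF s2]) (use j in simp)
    have "B1p k EE j (k+1) = 0" unfolding B1p_def using z1 by simp
    moreover have "B2p k EE j (k+1) = 0" unfolding B2p_def emul_def eshm_def using z1 by simp
    moreover have "B3p k EE j (k+1) = 0" unfolding B3p_def eshm_def using z2 by simp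
    ultimately show ?thesis unfolding Tp_def by simp
  qed
  have "coeff (Rk k EE (k+1)) 0 = (\<Sum>j<k. coeff (Tp k EE j (k+1)) 0)"
    unfolding Rk_def esum_def using L by (simp add: coeff_sum)
  also have "\<dots> = (\<Sum>j<k. cc j * cc (k-1-j) * of_nat (j+1) * of_nat (k-j)^2 / of_nat (k+1)^2)"
  proof (rule sum.cong)
    fix j assume "j \<in> {..<k}"
    then have j: "j < k" by simp
    show "coeff (Tp k EE j (k+1)) 0 = cc j * cc (k-1-j) * of_nat (j+1) * of_nat (k-j)^2 / of_nat (k+1)^2"
      by (simp only: T[OF j] Fp_top[OF j])
  qed simp
  also have "\<dots> = (\<Sum>j<k. cc j * cc (k-1-j) * of_nat (j+1) * of_nat (k-j)^2) / of_nat (k+1)^2"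
    by (simp add: sum_divide_distrib)
  finally show ?thesis .
qed

lemma R_top_cc: "coeff (Rk k EE (k+1)) 0 * of_nat (k+1) / (of_nat (k+1) - 1) = cc k"
proof -
  obtain n where n: "k = Suc n" using k1 by (cases k) auto
  have S: "(\<Sum>j<k. cc j * cc (k-1-j) * of_nat (j+1) * of_nat (k-j)^2) = of_nat k * of_nat (k+1) * cc k"
    using cc_identity[of n] unfolding n by simp
  have kz: "(of_nat k :: rat) \<noteq> 0" "(of_nat (k+1) :: rat) \<noteq> 0" using k1 by auto
  have e: "(of_nat (k+1) :: rat) - 1 = of_nat k" by simp
  have h4: "(K::rat) \<noteq> 0 \<Longrightarrow> (k'::rat) \<noteq> 0 \<Longrightarrow> k' * K * c / K^2 * K / k' = c" for K k' c
    by (simp add: field_simps power2_eq_square)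
  show ?thesis unfolding R_top S e using h4[OF kz(2) kz(1)] by simp
qed

end


lemma split3: "(N::nat) \<ge> 2 \<Longrightarrow> (\<Sum>s\<le>N. f s) = f 0 + f 1 + f N + (\<Sum>s\<in>{2..N-1}. (f s :: rat))"
proof -
  assume N: "N \<ge> 2"
  have "{..N} = insert 0 (insert 1 (insert N {2..N-1}))" using N by auto
  moreover have "0 \<notin> insert 1 (insert N {2..N-1})" "1 \<notin> insert N {2..N-1}" "N \<notin> {2..N-1}" using N by auto
  ultimately show ?thesis by (simp add: algebra_simps)
qed

lemma reidx: "(N::nat) \<ge> 2 \<Longrightarrow> (\<Sum>i\<in>{3..N}. g i) = (\<Sum>s\<in>{2..N-1}. (g (s+1) :: rat))"
proof -
  assume N: "N \<ge> 2"
  have e: "{3..N} = {2+1..(N-1)+1}" using N by simp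
  show ?thesis unfolding e by (rule sum.shift_bounds_cl_nat_ivl)
qed

context
  fixes k :: nat and EE :: "nat \<Rightarrow> ep"
  assumes k1: "k \<ge> 1" and IH: "\<forall>j<k. Inv j (EE j)"
begin

lemma VJ: "j < k \<Longrightarrow> n \<ge> 3 \<Longrightarrow> of_nat (rk_H n j) = ev (j+1) (EE j) n"
  using InvJ[OF k1 IH] unfolding Inv_def by blast
lemma VL: "j < k \<Longrightarrow> n \<ge> 3 \<Longrightarrow> of_nat (rk_H n (k-1-j)) = ev (k-j) (EE (k-1-j)) n"
proof -
  assume j: "j < k" and n: "n \<ge> 3"
  have "of_nat (rk_H n (k-1-j)) = ev (k-1-j+1) (EE (k-1-j)) n"
    using InvL2[OF k1 IH j] n unfolding Inv_def by blast
  moreover have "k - 1 - j + 1 = k - j" using j by simp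
  ultimately show ?thesis by simp
qed

lemma ev_F: "j < k \<Longrightarrow> n \<ge> 2 \<Longrightarrow> ev (k+1) (Fp k EE j) n =
   (\<Sum>s\<le>n-2. of_nat ((n-2) choose s) * ev (j+1) (EE j) (s+1) * ev (k-j) (EE (k-1-j)) ((n-2) - s + 2))"
proof -
  assume j: "j < k" and n: "n \<ge> 2"
  let ?G1 = "eshp 1 (EE j)" and ?G2 = "eshp 2 (EE (k-1-j))"
  have s1: "sup_in (j+1) ?G1" by (rule sup_eshp[OF supJ[OF k1 IH j]])
  have s2: "sup_in (k-j) ?G2" by (rule sup_eshp[OF supL[OF k1 IH j]])
  have jk: "j + 1 + (k - j) = k + 1" using j by simp
  have sc: "sup_in (k+1) (econv ?G1 ?G2)" using sup_econv[OF s1 s2] unfolding jk .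
  have "ev (k+1) (Fp k EE j) n = ev (k+1) (eshm (econv ?G1 ?G2)) (n - 1)"
    unfolding Fp_def by (rule ev_eshm[OF sup_eshm[OF sc]]) (use n in simp)
  also have "\<dots> = ev (k+1) (econv ?G1 ?G2) (n - 1 - 1)"
    by (rule ev_eshm[OF sc]) (use n in simp)
  also have "\<dots> = ev (j + 1 + (k - j)) (econv ?G1 ?G2) (n - 2)"
  proof -
    have e: "n - 1 - 1 = n - 2" by simp
    show ?thesis unfolding e jk ..
  qed
  also have "\<dots> = (\<Sum>s\<le>n-2. of_nat ((n-2) choose s) * ev (j+1) ?G1 s * ev (k-j) ?G2 (n - 2 - s))"
    by (rule ev_econv[OF s1 s2])
  also have "\<dots> = (\<Sum>s\<le>n-2. of_nat ((n-2) choose s) * ev (j+1) (EE j) (s+1) * ev (k-j) (EE (k-1-j)) ((n-2) - s + 2))"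
    by (simp add: ev_eshp)
  finally show ?thesis .
qed

lemma ev_B1: "j < k \<Longrightarrow> ev (k+1) (B1p k EE j) n = - (ev (j+1) (EE j) 1 * ev (k-j) (EE (k-1-j)) n)"
proof -
  assume j: "j < k"
  have "ev (k+1) (EE (k-1-j)) n = ev (k-j) (EE (k-1-j)) n" by (rule ev_mono[OF supL[OF k1 IH j]]) simp
  then show ?thesis unfolding B1p_def ev_esm by simp
qed

lemma ev_B2: "j < k \<Longrightarrow> n \<ge> 1 \<Longrightarrow> ev (k+1) (B2p k EE j) n =
     - ((of_nat n - 2) * ev (j+1) (EE j) 2 * ev (k-j) (EE (k-1-j)) (n-1))"
proof -
  assume j: "j < k" and n: "n \<ge> 1"
  have s: "sup_in (k-j) (EE (k-1-j))" by (rule supL[OF k1 IH j])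
  have "ev (k+1) (eshm (EE (k-1-j))) n = ev (k-j) (eshm (EE (k-1-j))) n"
    by (rule ev_mono[OF sup_eshm[OF s]]) simp
  also have "\<dots> = ev (k-j) (EE (k-1-j)) (n-1)" by (rule ev_eshm[OF s n])
  finally have e: "ev (k+1) (eshm (EE (k-1-j))) n = ev (k-j) (EE (k-1-j)) (n-1)" .
  show ?thesis unfolding B2p_def ev_esm ev_emul e by simp
qed

lemma ev_B3: "j < k \<Longrightarrow> n \<ge> 1 \<Longrightarrow> ev (k+1) (B3p k EE j) n =
     - (ev (k-j) (EE (k-1-j)) 2 * ev (j+1) (EE j) (n-1))"
proof -
  assume j: "j < k" and n: "n \<ge> 1"
  have s: "sup_in (j+1) (EE j)" by (rule supJ[OF k1 IH j])
  have "ev (k+1) (eshm (EE j)) n = ev (j+1) (eshm (EE j)) n"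
    by (rule ev_mono[OF sup_eshm[OF s]]) (use j in simp)
  also have "\<dots> = ev (j+1) (EE j) (n-1)" by (rule ev_eshm[OF s n])
  finally have e: "ev (k+1) (eshm (EE j)) n = ev (j+1) (EE j) (n-1)" .
  show ?thesis unfolding B3p_def ev_esm e by simp
qed

lemma conv_part: "j < k \<Longrightarrow> n \<ge> 4 \<Longrightarrow>
   (\<Sum>i\<in>{3..n-2}. of_nat ((n-2) choose (i-1)) * (of_nat (rk_H i j) * of_nat (rk_H (n+1-i) (k-1-j)) :: rat))
   = ev (k+1) (Tp k EE j) n"
proof -
  assume j: "j < k" and n: "n \<ge> 4"
  define N where "N = n - 2"
  have N2: "N \<ge> 2" and nN: "n = N + 2" using n unfolding N_def by auto
  define V where "V m = ev (j+1) (EE j) m" for m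
  define W where "W m = ev (k-j) (EE (k-1-j)) m" for m
  define f where "f s = of_nat (N choose s) * V (s+1) * W (N - s + 2)" for s
  have "(\<Sum>i\<in>{3..n-2}. of_nat ((n-2) choose (i-1)) * (of_nat (rk_H i j) * of_nat (rk_H (n+1-i) (k-1-j)) :: rat))
      = (\<Sum>s\<in>{2..N-1}. of_nat ((n-2) choose (s+1-1)) * (of_nat (rk_H (s+1) j) * of_nat (rk_H (n+1-(s+1)) (k-1-j))))"
    unfolding N_def by (rule reidx) (use N2 N_def in simp)
  also have "\<dots> = (\<Sum>s\<in>{2..N-1}. f s)"
  proof (rule sum.cong)
    fix s assume "s \<in> {2..N-1}"
    then have s: "2 \<le> s" "s \<le> N - 1" by auto
    have a: "of_nat (rk_H (s+1) j) = V (s+1)" unfolding V_def by (rule VJ[OF j]) (use s in simp)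
    have b: "of_nat (rk_H (N - s + 2) (k-1-j)) = W (N - s + 2)" unfolding W_def by (rule VL[OF j]) (use s nN in simp)
    have c: "n + 1 - (s+1) = N - s + 2" using s nN by simp
    have d: "(n-2) choose (s+1-1) = N choose s" unfolding N_def by simp
    show "of_nat ((n-2) choose (s+1-1)) * (of_nat (rk_H (s+1) j) * of_nat (rk_H (n+1-(s+1)) (k-1-j))) = f s"
      by (simp only: a b c d f_def mult.assoc)
  qed simp
  also have "\<dots> = (\<Sum>s\<le>N. f s) - f 0 - f 1 - f N" using split3[OF N2, of f] by simp
  also have "(\<Sum>s\<le>N. f s) = ev (k+1) (Fp k EE j) n"
    unfolding f_def V_def W_def N_def using ev_F[OF j, of n] n by simp
  also have "f 0 = V 1 * W n" unfolding f_def using nN by simp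
  also have "f 1 = (of_nat n - 2) * V 2 * W (n - 1)" unfolding f_def using nN N2 by (simp add: of_nat_diff numeral_2_eq_2)
  also have "f N = V (n - 1) * W 2" unfolding f_def using nN by (simp add: numeral_2_eq_2)
  finally have X: "(\<Sum>i\<in>{3..n-2}. of_nat ((n-2) choose (i-1)) * (of_nat (rk_H i j) * of_nat (rk_H (n+1-i) (k-1-j)) :: rat))
      = ev (k+1) (Fp k EE j) n - V 1 * W n - (of_nat n - 2) * V 2 * W (n - 1) - V (n - 1) * W 2" .
  have Y: "ev (k+1) (Tp k EE j) n = ev (k+1) (Fp k EE j) n - V 1 * W n - (of_nat n - 2) * V 2 * W (n - 1) - W 2 * V (n - 1)"
  proof -
    have n1: "n \<ge> 1" using n by simp
    show ?thesis unfolding Tp_def ev_eadd ev_B1[OF j] ev_B2[OF j n1] ev_B3[OF j n1] V_def W_def by simp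
  qed
  show ?thesis unfolding X Y by (simp add: algebra_simps)
qed

lemma R_value: "n \<ge> 4 \<Longrightarrow> of_nat (rk_H n k) - of_nat (rk_H (n-1) k) = ev (k+1) (Rk k EE) n"
proof -
  assume n: "n \<ge> 4"
  have r: "rk_H n k = rk_H (n-1) k + rk_H (n-1) (k-1) +
     (\<Sum>i\<in>{3..n-2}. ((n - 2) choose (i - 1)) * (\<Sum>j\<le>k-1. rk_H i j * rk_H (n+1-i) (k-1-j)))"
    by (rule rk_rec[OF n k1])
  have "(of_nat (rk_H n k) :: rat) - of_nat (rk_H (n-1) k) = of_nat (rk_H (n-1) (k-1)) +
     (\<Sum>i\<in>{3..n-2}. of_nat ((n - 2) choose (i - 1)) * (\<Sum>j\<le>k-1. of_nat (rk_H i j) * of_nat (rk_H (n+1-i) (k-1-j))))"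
    unfolding r by (simp add: of_nat_sum)
  also have "(\<Sum>i\<in>{3..n-2}. of_nat ((n - 2) choose (i - 1)) * (\<Sum>j\<le>k-1. of_nat (rk_H i j) * of_nat (rk_H (n+1-i) (k-1-j))))
      = (\<Sum>j<k. \<Sum>i\<in>{3..n-2}. of_nat ((n-2) choose (i-1)) * (of_nat (rk_H i j) * of_nat (rk_H (n+1-i) (k-1-j)) :: rat))"
  proof -
    have "{..k-1} = {..<k}" using k1 by auto
    then show ?thesis by (simp add: sum_distrib_left sum.swap[of _ "{3..n-2}"])
  qed
  also have "\<dots> = (\<Sum>j<k. ev (k+1) (Tp k EE j) n)" by (rule sum.cong) (use conv_part n in auto)
  also have "of_nat (rk_H (n-1) (k-1)) = ev (k+1) (eshm (EE (k-1))) n"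
  proof -
    have s: "sup_in k (EE (k-1))" using DBL[OF k1 IH] unfolding DB_def by blast
    have "ev (k+1) (eshm (EE (k-1))) n = ev k (eshm (EE (k-1))) n" by (rule ev_mono[OF sup_eshm[OF s]]) simp
    also have "\<dots> = ev k (EE (k-1)) (n-1)" by (rule ev_eshm[OF s]) (use n in simp)
    also have "\<dots> = of_nat (rk_H (n-1) (k-1))" using InvL[OF k1 IH] n k1 unfolding Inv_def by simp
    finally show ?thesis by simp
  qed
  finally show ?thesis unfolding Rk_def ev_eadd ev_esum by simp
qed

end


lemma step:
  assumes k1: "k \<ge> 1" and IH: "\<forall>j<k. Inv j (EE j)"
  shows "\<exists>E. Inv k E"
proof -
  define R where "R = Rk k EE"
  define A where "A = eAD (k+1) (Er k) R"
  define C where "C = of_nat (rk_H 3 k) - ev (k+1) A 3"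
  define E where "E = eadd A (econst C)"
  have gR: "GD (k+1) (Er k) (sk k) R" unfolding R_def by (rule GD_R[OF k1 IH])
  have dfeq: "\<forall>r. 1 \<le> r \<longrightarrow> r \<le> k+1 \<longrightarrow> (if r = 1 then Er k r + 1 else Er k r) = Dk k r"
    using k1 unfolding Er_def Dk_def by auto
  have gA0: "GD (k+1) (\<lambda>r. if r = 1 then Er k r + 1 else Er k r) (sk k) A"
    unfolding A_def by (rule GD_eAD[OF gR])
  have gA: "GD (k+1) (Dk k) (sk k) A"
    by (rule GD_weaken[OF gA0]) (use dfeq in auto)
  have gC: "GD (k+1) (Dk k) (sk k) (econst C)" by (rule GD_econst) (use k1 in \<open>auto simp: Dk_def\<close>)
  have gE: "GD (k+1) (Dk k) (sk k) E" unfolding E_def by (rule GD_eadd[OF gA gC])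
  have sE: "\<forall>r. 1 \<le> r \<longrightarrow> r \<le> k+1 \<longrightarrow> SP r (Dk k) (sk k) E"
  proof (intro allI impI)
    fix r assume r: "1 \<le> r" "r \<le> k+1"
    have "SP r (\<lambda>r. if r = 1 then Er k r + 1 else Er k r) (sk k) A"
      unfolding A_def by (rule SP_eAD[OF gR]) (use SP_R[OF k1 IH] r in \<open>auto simp: R_def\<close>)
    then have "SP r (Dk k) (sk k) A" by (rule SP_transfer) (use dfeq r in auto)
    then show "SP r (Dk k) (sk k) E" unfolding E_def by (rule SP_eadd1[OF _ gC])
  qed
  have top: "coeff (E (k+1)) 0 = cc k"
  proof -
    have er0: "Er k (k+1) = 0" using k1 unfolding Er_def by simp
    have dbR: "DB (k+1) (Er k) R" using gR unfolding GD_def by simp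
    have "coeff (A (k+1)) (Er k (k+1)) = coeff (R (k+1)) (Er k (k+1)) * of_nat (k+1) / (of_nat (k+1) - 1)"
      unfolding A_def by (rule eAD_top[OF dbR]) (use k1 in auto)
    then have "coeff (A (k+1)) 0 = cc k" using R_top_cc[OF k1 IH] unfolding er0 R_def by simp
    moreover have "econst C (k+1) = 0" using k1 unfolding econst_def by simp
    ultimately show ?thesis unfolding E_def by simp
  qed
  have ec: "ev (k+1) (econst C) n = C" for n by (rule ev_econst) simp
  have vals: "of_nat (rk_H (m+3) k) = ev (k+1) E (m+3)" for m
  proof (induction m)
    case 0
    show ?case unfolding E_def ev_eadd ec by (simp add: C_def)
  next
    case (Suc m)
    have n4: "Suc m + 3 \<ge> 4" by simp
    have dbR: "DB (k+1) (Er k) R" using gR unfolding GD_def by simp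
    have sR: "sup_in (k+1) R" "\<forall>r. degree (R r) \<le> Er k r" using dbR unfolding DB_def by auto
    have a: "ev (k+1) A (Suc m + 3) - ev (k+1) A (Suc m + 3 - 1) = ev (k+1) R (Suc m + 3)"
      unfolding A_def by (rule ev_eAD[OF sR]) simp
    have b: "of_nat (rk_H (Suc m + 3) k) - of_nat (rk_H (Suc m + 3 - 1) k) = ev (k+1) R (Suc m + 3)"
      unfolding R_def by (rule R_value[OF k1 IH n4])
    have e: "Suc m + 3 - 1 = m + 3" by simp
    show ?case using a b Suc.IH unfolding e E_def ev_eadd ec by (simp add: algebra_simps)
  qed
  have "\<forall>n\<ge>3. of_nat (rk_H n k) = ev (k+1) E n"
  proof (intro allI impI)
    fix n :: nat assume "n \<ge> 3"
    then obtain m where "n = m + 3" by (metis add.commute le_iff_add)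
    then show "of_nat (rk_H n k) = ev (k+1) E n" using vals by simp
  qed
  then have "Inv k E" unfolding Inv_def using gE sE top by blast
  then show ?thesis by blast
qed

lemma Inv0: "Inv 0 (econst 1)"
proof -
  have g: "GD 1 (Dk 0) (sk 0) (econst 1)"
    unfolding GD_def DB_def sup_in_def econst_def by (auto simp: sk_def Dk_def)
  have s: "SP 1 (Dk 0) (sk 0) (econst 1)" unfolding SP_def econst_def by (simp add: sk_def Dk_def)
  have t: "coeff (econst 1 (0+1)) 0 = cc 0" unfolding econst_def cc_def by simp
  have v: "\<forall>n\<ge>3. of_nat (rk_H n 0) = ev (0+1) (econst 1) n" using rk_0 ev_econst[of 1 1] by simp
  show ?thesis unfolding Inv_def using g s t v by (auto simp: le_Suc_eq)
qed

lemma Inv_ex: "\<exists>E. Inv k E"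
proof (induction k rule: less_induct)
  case (less k)
  show ?case
  proof (cases "k = 0")
    case True then show ?thesis using Inv0 by blast
  next
    case False
    define EE where "EE j = (SOME E. Inv j E)" for j
    have "\<forall>j<k. Inv j (EE j)"
    proof (intro allI impI)
      fix j assume "j < k"
      then have "\<exists>E. Inv j E" using less by blast
      then show "Inv j (EE j)" unfolding EE_def by (rule someI_ex)
    qed
    then show ?thesis using step False by simp
  qed
qed


theorem mainTheorem11:
  fixes k :: nat
  assumes "k \<ge> 1"
  shows "\<exists>q :: nat \<Rightarrow> rat poly.
           (\<forall>m\<in>{1..k}. degree (q m) = 2 * m \<and> lead_coeff (q m) > 0) \<and>
           (\<forall>n\<ge>3. (of_nat (rk_H n k) :: rat) =
               of_nat ((k + 1) ^ (k - 1)) / of_nat (fact (k + 1)) * of_nat (k + 1) ^ n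
               + (\<Sum>m=1..k. (-1) ^ m * poly (q m) (of_nat n) * of_nat (k + 1 - m) ^ n))"
proof -
  obtain E where i: "Inv k E" using Inv_ex by blast
  define q where "q m = smult ((-1)^m) (E (k+1-m))" for m
  have gd: "GD (k+1) (Dk k) (sk k) E" using i unfolding Inv_def by blast
  have db: "DB (k+1) (Dk k) E" using gd unfolding GD_def by blast
  have A: "degree (q m) = 2 * m \<and> lead_coeff (q m) > 0" if m: "m \<in> {1..k}" for m
  proof -
    let ?r = "k + 1 - m"
    have r: "1 \<le> ?r" "?r \<le> k + 1" using m by auto
    have D: "Dk k ?r = 2 * m" using m unfolding Dk_def by auto
    have S: "sk k ?r = (-1)^m" using m unfolding sk_def by auto
    have sp: "SP ?r (Dk k) (sk k) E" using i r unfolding Inv_def by blast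
    then have pos: "0 < (-1)^m * coeff (E ?r) (2*m)" unfolding SP_def D S .
    then have nz: "coeff (E ?r) (2*m) \<noteq> 0" by auto
    have le: "degree (E ?r) \<le> 2 * m" using db D unfolding DB_def by metis
    have dg: "degree (E ?r) = 2 * m" using le le_degree[OF nz] by simp
    have dq: "degree (q m) = 2 * m" unfolding q_def using dg by simp
    moreover have "lead_coeff (q m) = (-1)^m * coeff (E ?r) (2*m)" unfolding dq unfolding q_def by simp
    ultimately show ?thesis using pos by simp
  qed
  have B: "(of_nat (rk_H n k) :: rat) =
               of_nat ((k + 1) ^ (k - 1)) / of_nat (fact (k + 1)) * of_nat (k + 1) ^ n
               + (\<Sum>m=1..k. (-1) ^ m * poly (q m) (of_nat n) * of_nat (k + 1 - m) ^ n)" if n: "n \<ge> 3" for n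
  proof -
    define f where "f r = poly (E r) (of_nat n) * of_nat r ^ n" for r
    have v: "of_nat (rk_H n k) = ev (k+1) E n" using i n unfolding Inv_def by blast
    have e0: "E 0 = 0" using db unfolding DB_def sup_in_def by simp
    have top: "E (k+1) = [:cc k:]"
    proof -
      have "degree (E (k+1)) \<le> 0" using db unfolding DB_def Dk_def by (metis diff_self_eq_0 mult_0_right)
      then have "E (k+1) = [:coeff (E (k+1)) 0:]" using degree_0_id by (metis le_zero_eq)
      then show ?thesis using i unfolding Inv_def by simp
    qed
    have "ev (k+1) E n = (\<Sum>r\<le>k. f r) + f (k+1)" unfolding ev_def f_def by simp
    also have "(\<Sum>r\<le>k. f r) = f 0 + (\<Sum>r\<in>{1..k}. f r)"
    proof -
      have "{..k} = insert 0 {1..k}" by auto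
      then show ?thesis by simp
    qed
    also have "f 0 = 0" unfolding f_def using e0 by simp
    also have "(\<Sum>r\<in>{1..k}. f r) = (\<Sum>m\<in>{1..k}. f (k + 1 - m))"
      using sum.atLeastAtMost_rev[of f 1 k] by (simp add: add.commute)
    also have "\<dots> = (\<Sum>m=1..k. (-1) ^ m * poly (q m) (of_nat n) * of_nat (k + 1 - m) ^ n)"
    proof (rule sum.cong)
      fix m assume "m \<in> {1..k}"
      have "(-1::rat)^m * (-1)^m = 1" by (simp add: power_mult_distrib[symmetric])
      then show "f (k + 1 - m) = (-1) ^ m * poly (q m) (of_nat n) * of_nat (k + 1 - m) ^ n"
        unfolding f_def q_def by (simp add: mult.assoc[symmetric])
    qed simp
    also have "f (k+1) = of_nat ((k + 1) ^ (k - 1)) / of_nat (fact (k + 1)) * of_nat (k + 1) ^ n"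
      unfolding f_def top cc_def by simp
    finally show ?thesis using v by simp
  qed
  show ?thesis by (rule exI[of _ q]) (use A B in blast)
qed


end
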